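(* Suppose $a(0)\in\mathbb R^m$ and $W(0)\in\mathbb R^{m\times p}$ are chosen randomly, independently of $X$ and $\mathbf y$, such that the distribution of $\theta(0)=a(0)^\top W(0)$ is symmetric about the origin, and let $\hat\theta$ be the estimator defined in the context with this $\theta(0)$. Then $$\mathbb E_{a(0),W(0),X,\mathbf y}[\mathsf{Risk}(\hat\theta)]\ge \mathbb E[\theta^{\star\top}B\theta^\star]+\sigma^2\,\mathbb E[\mathrm{Tr}(C)],$$ where $B=(I-X^\top(XX^\top)^{-1}X)\Sigma(I-X^\top(XX^\top)^{-1}X)$ and $C=(XX^\top)^{-1}X\Sigma X^\top(XX^\top)^{-1}$.
   Context: Setting: $p>n$; data $(x_i,y_i)$ i.i.d. with test pair $(x,y)$; $X\in\mathbb R^{n\times p}$ with rows $x_i^\top$ (assumed of full row rank $n$), $\mathbf y=(y_i)$; $\theta^\star\in\arg\min_\theta\mathbb E[(y-x^\top\theta)^2]$, $\boldsymbol\epsilon=\mathbf y-X\theta^\star$; $\Sigma=\mathbb E[xx^\top]$; the noise satisfies $\mathbb E[y-x^\top\theta^\star\mid x]=0$ and $\mathbb E[(y-x^\top\theta^\star)^2\mid x]=\sigma^2$, with noise components independent across samples. $\mathsf{Risk}(\theta)=\mathbb E_{x,y}[(y-x^\top\theta)^2-(y-x^\top\theta^\star)^2]$. The estimator: $w=\theta(0)/\sqrt{\|\theta(0)\|}$ and $\hat\theta\in\arg\min_\theta\{\|\theta\|^{3/2}-w^\top\theta:\mathbf y=X\theta\}$ (the limit of gradient flow on a balanced two-layer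 linear network initialized at $a(0),W(0)$). *)

theory Defs
  imports "HOL-Probability.Probability"
begin

definition Risk :: "((real^'p) \<times> real) measure \<Rightarrow> real^'p \<Rightarrow> real^'p \<Rightarrow> real" where
  "Risk D \<theta>s \<theta> = (\<integral>z. (snd z - fst z \<bullet> \<theta>)\<^sup>2 - (snd z - fst z \<bullet> \<theta>s)\<^sup>2 \<partial>D)"

definition Sigma_mat :: "((real^'p) \<times> real) measure \<Rightarrow> real^'p^'p" where
  "Sigma_mat D = (\<chi> i j. \<integral>z. fst z $ i * fst z $ j \<partial>D)"

definition init_dir :: "real^'p \<Rightarrow> real^'p" where
  "init_dir \<theta>0 = (1 / sqrt (norm \<theta>0)) *\<^sub>R \<theta>0"

definition is_bias_min :: "real^'p^'n \<Rightarrow> real^'n \<Rightarrow> real^'p \<Rightarrow> real^'p \<Rightarrow> bool" where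
  "is_bias_min X y w \<theta> \<longleftrightarrow> y = X *v \<theta> \<and>
     (\<forall>\<theta>'. y = X *v \<theta>' \<longrightarrow> norm \<theta> powr (3/2) - w \<bullet> \<theta> \<le> norm \<theta>' powr (3/2) - w \<bullet> \<theta>')"

definition null_proj :: "real^'p^'n \<Rightarrow> real^'p^'p" where
  "null_proj X = mat 1 - transpose X ** matrix_inv (X ** transpose X) ** X"

definition B_mat :: "real^'p^'p \<Rightarrow> real^'p^'n \<Rightarrow> real^'p^'p" where
  "B_mat \<Sigma> X = null_proj X ** \<Sigma> ** null_proj X"

definition C_mat :: "real^'p^'p \<Rightarrow> real^'p^'n \<Rightarrow> real^'n^'n" where
  "C_mat \<Sigma> X = matrix_inv (X ** transpose X) ** X ** \<Sigma> ** transpose X ** matrix_inv (X ** transpose X)"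

end

theory Submission
  imports Defs
begin

lemma vec_measurable_iff:
  fixes f :: "'a \<Rightarrow> 'b::euclidean_space^'n"
  shows "f \<in> borel_measurable M \<longleftrightarrow> (\<forall>i. (\<lambda>x. f x $ i) \<in> borel_measurable M)"
proof
  assume f: "f \<in> borel_measurable M"
  show "\<forall>i. (\<lambda>x. f x $ i) \<in> borel_measurable M"
  proof
    fix i
    have "(\<lambda>x. x $ i) \<in> borel_measurable (borel :: ('b^'n) measure)"
      by (intro borel_measurable_continuous_onI linear_continuous_on bounded_linear_vec_nth)
    from measurable_compose[OF f this] show "(\<lambda>x. f x $ i) \<in> borel_measurable M" .
  qed
next
  assume c: "\<forall>i. (\<lambda>x. f x $ i) \<in> borel_measurable M"
  have ax: "\<And>i. (\<lambda>x. axis i (f x $ i) :: 'b^'n) \<in> borel_measurable M"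
  proof -
    fix i
    have "(axis i :: 'b \<Rightarrow> 'b^'n) \<in> borel_measurable borel"
      unfolding axis_def apply (intro borel_measurable_continuous_onI continuous_on_vec_lambda)
      subgoal for j by (cases "j = i") (auto simp: continuous_on_id continuous_on_const)
      done
    from measurable_compose[OF c[rule_format] this] show "?thesis i" .
  qed
  have "f = (\<lambda>x. \<Sum>i\<in>UNIV. axis i (f x $ i))"
    by (auto simp: vec_eq_iff axis_def sum.delta' cong: if_cong)
  also have "\<dots> \<in> borel_measurable M"
    using ax by (intro borel_measurable_sum) auto
  finally show "f \<in> borel_measurable M" .
qed

lemma meas_nth[measurable (raw)]:
  fixes f :: "'a \<Rightarrow> 'b::euclidean_space^'n"
  shows "f \<in> borel_measurable M \<Longrightarrow> (\<lambda>x. f x $ i) \<in> borel_measurable M"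
  using vec_measurable_iff by blast

lemma meas_vec_lambda:
  fixes g :: "'a \<Rightarrow> 'n::finite \<Rightarrow> 'b::euclidean_space"
  shows "(\<And>i. (\<lambda>x. g x i) \<in> borel_measurable M) \<Longrightarrow> (\<lambda>x. \<chi> i. g x i) \<in> borel_measurable M"
  by (subst vec_measurable_iff) simp

lemma meas_matmul[measurable (raw)]:
  fixes A :: "'a \<Rightarrow> real^'n^'m" and B :: "'a \<Rightarrow> real^'k^'n"
  assumes "A \<in> borel_measurable M" "B \<in> borel_measurable M"
  shows "(\<lambda>x. A x ** B x) \<in> borel_measurable M"
  unfolding matrix_matrix_mult_def
  by (intro meas_vec_lambda) (use assms in measurable)

lemma meas_mvmul[measurable (raw)]:
  fixes A :: "'a \<Rightarrow> real^'n^'m" and B :: "'a \<Rightarrow> real^'n"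
  assumes "A \<in> borel_measurable M" "B \<in> borel_measurable M"
  shows "(\<lambda>x. A x *v B x) \<in> borel_measurable M"
  unfolding matrix_vector_mult_def
  by (intro meas_vec_lambda) (use assms in measurable)

lemma meas_transpose[measurable (raw)]:
  fixes A :: "'a \<Rightarrow> real^'n^'m"
  assumes "A \<in> borel_measurable M"
  shows "(\<lambda>x. transpose (A x)) \<in> borel_measurable M"
  unfolding transpose_def
  by (intro meas_vec_lambda) (use assms in measurable)

lemma meas_det[measurable (raw)]:
  fixes A :: "'a \<Rightarrow> real^'n^'n"
  assumes "A \<in> borel_measurable M"
  shows "(\<lambda>x. det (A x)) \<in> borel_measurable M"
  unfolding det_def by (use assms in measurable)

lemma meas_trace[measurable (raw)]:
  fixes A :: "'a \<Rightarrow> real^'n^'n"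
  assumes "A \<in> borel_measurable M"
  shows "(\<lambda>x. trace (A x)) \<in> borel_measurable M"
  unfolding trace_def by (use assms in measurable)

definition minv :: "real^'n^'n \<Rightarrow> real^'n^'n" where
  "minv A = (\<chi> k j. det (\<chi> i l. if l = k then (if i = j then 1 else 0) else A$i$l) / det A)"

lemma meas_minv[measurable (raw)]:
  fixes A :: "'a \<Rightarrow> real^'n^'n"
  assumes "A \<in> borel_measurable M"
  shows "(\<lambda>x. minv (A x)) \<in> borel_measurable M"
  unfolding minv_def
  apply (intro meas_vec_lambda)
  apply (rule borel_measurable_divide)
   apply (rule meas_det)
   apply (intro meas_vec_lambda)
  using assms apply measurable
  done

lemma matrix_inv_both:
  fixes A :: "real^'n^'n"
  assumes "invertible A"
  shows "A ** matrix_inv A = mat 1" "matrix_inv A ** A = mat 1"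
proof -
  from assms obtain B where "A ** B = mat 1 \<and> B ** A = mat 1" unfolding invertible_def by blast
  then have "A ** matrix_inv A = mat 1 \<and> matrix_inv A ** A = mat 1"
    unfolding matrix_inv_def by (rule someI)
  then show "A ** matrix_inv A = mat 1" "matrix_inv A ** A = mat 1" by auto
qed

lemma matrix_inv_minv:
  fixes A :: "real^'n^'n"
  assumes "invertible A"
  shows "matrix_inv A = minv A"
proof -
  have d0: "det A \<noteq> 0" using assms invertible_det_nz by blast
  have R: "A ** matrix_inv A = mat 1" using matrix_inv_both[OF assms] by simp
  show ?thesis
  proof (subst vec_eq_iff, intro allI, subst vec_eq_iff, intro allI)
    fix k j
    let ?x = "\<chi> k. matrix_inv A $ k $ j"
    let ?b = "\<chi> i. if i = j then 1 else (0::real)"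
    have "A *v ?x = ?b"
    proof -
      have "A *v ?x = (\<chi> i. (A ** matrix_inv A) $ i $ j)"
        by (simp add: matrix_vector_mult_def matrix_matrix_mult_def)
      also have "\<dots> = ?b" by (simp add: R mat_def)
      finally show ?thesis .
    qed
    then have "?x = (\<chi> k. det(\<chi> i l. if l=k then ?b$i else A$i$l) / det A)"
      using cramer[OF d0] by blast
    then have "?x $ k = (\<chi> k. det(\<chi> i l. if l=k then ?b$i else A$i$l) / det A) $ k" by simp
    moreover have "(\<chi> i l. if l=k then ?b$i else A$i$l) = (\<chi> i l. if l = k then (if i = j then 1 else 0) else A$i$l)"
      by (simp add: vec_eq_iff)
    ultimately show "matrix_inv A $ k $ j = minv A $ k $ j"
      by (simp add: minv_def)
  qed
qed

definition cc :: "real \<Rightarrow> real \<Rightarrow> real" where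
  "cc a b = sqrt ((8/81) * (b\<^sup>2 + sqrt (b^4 + (81/4) * a\<^sup>2)))"

lemma cc_nonneg: "cc a b \<ge> 0" unfolding cc_def by simp

lemma cc_eq: "(81/16) * (cc a b)^4 = a\<^sup>2 + (cc a b)\<^sup>2 * b\<^sup>2"
proof -
  define S where "S = sqrt (b^4 + (81/4) * a\<^sup>2)"
  have S0: "S \<ge> 0" unfolding S_def by simp
  have S2: "S\<^sup>2 = b^4 + (81/4) * a\<^sup>2" unfolding S_def
    by (simp add: add_nonneg_nonneg)
  have Sb: "S \<ge> b\<^sup>2" unfolding S_def
    by (rule real_le_rsqrt) (simp add: power2_eq_square power4_eq_xxxx)
  have u: "(cc a b)\<^sup>2 = (8/81) * (b\<^sup>2 + S)" unfolding cc_def S_def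
    by (simp add: add_nonneg_nonneg)
  have "(cc a b)^4 = ((cc a b)\<^sup>2)\<^sup>2" by (simp add: power_mult[symmetric])
  also have "\<dots> = (64/6561) * (b\<^sup>2 + S)\<^sup>2" unfolding u power_mult_distrib by (simp add: power2_eq_square)
  finally have c4: "(cc a b)^4 = (64/6561) * (b\<^sup>2 + S)\<^sup>2" .
  have e: "(b\<^sup>2 + S)\<^sup>2 = 2 * b^4 + 2 * b\<^sup>2 * S + (81/4) * a\<^sup>2"
  proof -
    have "(b\<^sup>2 + S)\<^sup>2 = (b\<^sup>2)\<^sup>2 + 2 * b\<^sup>2 * S + S\<^sup>2" by (simp add: power2_sum)
    also have "(b\<^sup>2)\<^sup>2 = b^4" by (simp add: power_mult[symmetric])
    finally show ?thesis using S2 by simp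
  qed
  show ?thesis unfolding c4 u e by (simp add: algebra_simps)
qed

lemma cc_zero: "cc a b = 0 \<Longrightarrow> b = 0"
proof -
  assume "cc a b = 0"
  then have "(8/81) * (b\<^sup>2 + sqrt (b^4 + (81/4) * a\<^sup>2)) = 0"
    unfolding cc_def by (simp add: add_nonneg_nonneg)
  then have "b\<^sup>2 + sqrt (b^4 + (81/4) * a\<^sup>2) = 0" by simp
  moreover have "sqrt (b^4 + (81/4) * a\<^sup>2) \<ge> 0" by simp
  ultimately have "b\<^sup>2 \<le> 0" by linarith
  then have "b\<^sup>2 = 0" using zero_le_power2[of b] by linarith
  then show "b = 0" by simp
qed

lemma sqrt_cube_tangent:
  fixes s t :: real
  assumes "s \<ge> 0" "t > 0" "s^3 - t^3 \<le> (3/2) * t * (s\<^sup>2 - t\<^sup>2)"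
  shows "s = t"
proof -
  have e1: "(s-t)\<^sup>2 * (s + t/2) + (3/2)*t * s\<^sup>2 = s^3 + (1/2)*t^3"
    by (simp add: power2_eq_square power3_eq_cube algebra_simps)
  have e2: "(3/2) * t * (s\<^sup>2 - t\<^sup>2) = (3/2)*t * s\<^sup>2 - (3/2)*t^3"
    by (simp add: power2_eq_square power3_eq_cube field_simps)
  have "(s-t)\<^sup>2 * (s + t/2) \<le> 0" using assms(3) e1 e2 by linarith
  moreover have "s + t/2 > 0" using assms by simp
  ultimately have "(s-t)\<^sup>2 \<le> 0"
    by (simp add: mult_le_0_iff)
  then show ?thesis by simp
qed

lemma norm_powr_32: "norm (x::'a::real_normed_vector) powr (3/2) = (sqrt (norm x))^3"
proof -
  have "(sqrt (norm x))^3 = (norm x powr (1/2)) powr 3"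
    by (simp add: powr_half_sqrt powr_realpow)
  also have "\<dots> = norm x powr (3/2)" by (simp add: powr_powr)
  finally show ?thesis by simp
qed

lemma core_unique:
  fixes r g v :: "real^'p"
  assumes rv: "r \<bullet> v = 0" and rg: "r \<bullet> g = 0"
    and hyp: "norm (r + v) powr (3/2) - g \<bullet> v \<le> norm (r + cc (norm r) (norm g) *\<^sub>R g) powr (3/2) - cc (norm r) (norm g) * (g \<bullet> g)"
  shows "v = cc (norm r) (norm g) *\<^sub>R g"
proof -
  define a where "a = norm r"
  define b where "b = norm g"
  define c where "c = cc a b"
  have c0: "c \<ge> 0" unfolding c_def by (rule cc_nonneg)
  have ceq: "(81/16) * c^4 = a\<^sup>2 + c\<^sup>2 * b\<^sup>2" unfolding c_def by (rule cc_eq)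
  have gg: "g \<bullet> g = b\<^sup>2" unfolding b_def by (simp add: power2_norm_eq_inner)
  have nrv: "(norm (r + v))\<^sup>2 = a\<^sup>2 + (norm v)\<^sup>2"
    unfolding a_def power2_norm_eq_inner using rv by (simp add: inner_add inner_commute)
  have nrg: "(norm (r + c *\<^sub>R g))\<^sup>2 = a\<^sup>2 + c\<^sup>2 * b\<^sup>2"
    unfolding a_def b_def power2_norm_eq_inner using rg
    by (simp add: inner_add inner_commute power2_eq_square)
  define s where "s = sqrt (norm (r + v))"
  define t where "t = sqrt (norm (r + c *\<^sub>R g))"
  have s0: "s \<ge> 0" and t0: "t \<ge> 0" unfolding s_def t_def by simp_all
  have s4: "s^4 = a\<^sup>2 + (norm v)\<^sup>2"
  proof -
    have "s^4 = (s\<^sup>2)\<^sup>2" by simp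
    also have "s\<^sup>2 = norm (r+v)" unfolding s_def by simp
    finally show ?thesis using nrv by simp
  qed
  have t4: "t^4 = a\<^sup>2 + c\<^sup>2 * b\<^sup>2"
  proof -
    have "t^4 = (t\<^sup>2)\<^sup>2" by simp
    also have "t\<^sup>2 = norm (r+c *\<^sub>R g)" unfolding t_def by simp
    finally show ?thesis using nrg by simp
  qed
  have hyp': "s^3 - g \<bullet> v \<le> t^3 - c * b\<^sup>2"
    using hyp unfolding s_def t_def norm_powr_32 c_def a_def b_def gg by simp
  have tc: "t = (3/2) * c"
  proof -
    have "((3/2)*c)^4 = (3/2)^4*c^4" by (simp only: power_mult_distrib)
    moreover have "(3/2::real)^4 = 81/16" by (simp add: power4_eq_xxxx)
    ultimately have "((3/2)*c)^4 = (81/16)*c^4" by simp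
    then have "t^4 = ((3/2)*c)^4" using t4 ceq by simp
    then show ?thesis
      by (rule power_eq_imp_eq_base) (use t0 c0 in auto)
  qed
  have gv: "g \<bullet> v \<le> b * norm v" unfolding b_def by (rule norm_cauchy_schwarz)
  show ?thesis
  proof (cases "c = 0")
    case True
    then have "b = 0" unfolding c_def by (rule cc_zero)
    then have "g = 0" unfolding b_def by simp
    with hyp' True tc have "s^3 \<le> 0" by simp
    moreover have "s^3 \<ge> 0" using s0 by simp
    ultimately have "s^3 = 0" by linarith
    then have "s = 0" by simp
    then have "a\<^sup>2 + (norm v)\<^sup>2 = 0" using s4 by simp
    moreover have "a\<^sup>2 \<ge> 0" "(norm v)\<^sup>2 \<ge> 0" by simp_all
    ultimately have "(norm v)\<^sup>2 = 0" by linarith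
    then have "norm v = 0" by simp
    then show ?thesis using \<open>g = 0\<close> by (simp add: c_def a_def b_def)
  next
    case False
    then have cp: "c > 0" using c0 by simp
    have tp: "t > 0" using tc cp by simp
    \<comment> \<open>Cauchy-Schwarz in the plane\<close>
    have cs: "a\<^sup>2 + c * b * norm v \<le> t\<^sup>2 * s\<^sup>2"
    proof -
      have "t\<^sup>2 * s\<^sup>2 = sqrt (a\<^sup>2 + c\<^sup>2 * b\<^sup>2) * sqrt (a\<^sup>2 + (norm v)\<^sup>2)"
      proof -
        have "sqrt (a\<^sup>2 + c\<^sup>2 * b\<^sup>2) = t\<^sup>2"
          by (rule real_sqrt_unique) (use t4 in \<open>simp_all add: power_mult[symmetric]\<close>)
        moreover have "sqrt (a\<^sup>2 + (norm v)\<^sup>2) = s\<^sup>2"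
          by (rule real_sqrt_unique) (use s4 in \<open>simp_all add: power_mult[symmetric]\<close>)
        ultimately show ?thesis by simp
      qed
      moreover have "a\<^sup>2 + c * b * norm v \<le> sqrt (a\<^sup>2 + c\<^sup>2 * b\<^sup>2) * sqrt (a\<^sup>2 + (norm v)\<^sup>2)"
      proof -
        have "(a\<^sup>2 + c * b * norm v)\<^sup>2 \<le> (a\<^sup>2 + c\<^sup>2 * b\<^sup>2) * (a\<^sup>2 + (norm v)\<^sup>2)"
        proof -
          have "0 \<le> a\<^sup>2 * (c*b - norm v)\<^sup>2" by simp
          then show ?thesis by (simp add: power2_eq_square algebra_simps)
        qed
        then have "a\<^sup>2 + c * b * norm v \<le> sqrt ((a\<^sup>2 + c\<^sup>2 * b\<^sup>2) * (a\<^sup>2 + (norm v)\<^sup>2))"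
          by (rule real_le_rsqrt)
        then show ?thesis by (simp add: real_sqrt_mult)
      qed
      ultimately show ?thesis by simp
    qed
    have "g \<bullet> v - c * b\<^sup>2 \<le> (3/2) * t * (s\<^sup>2 - t\<^sup>2)"
    proof -
      have "c * (g \<bullet> v - c * b\<^sup>2) \<le> c * (b * norm v) - c * c * b\<^sup>2"
        using gv cp by (simp add: algebra_simps)
      also have "\<dots> \<le> t\<^sup>2 * s\<^sup>2 - a\<^sup>2 - c\<^sup>2 * b\<^sup>2" using cs by (simp add: power2_eq_square algebra_simps)
      also have "\<dots> = t\<^sup>2 * (s\<^sup>2 - t\<^sup>2)"
        using t4 by (simp add: power2_eq_square power4_eq_xxxx algebra_simps)
      also have "\<dots> = c * ((3/2) * t * (s\<^sup>2 - t\<^sup>2))"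
        using tc by (simp add: power2_eq_square algebra_simps)
      finally show ?thesis using cp by simp
    qed
    with hyp' have "s^3 - t^3 \<le> (3/2) * t * (s\<^sup>2 - t\<^sup>2)" by simp
    then have st: "s = t" using sqrt_cube_tangent s0 tp by blast
    then have nv: "(norm v)\<^sup>2 = c\<^sup>2 * b\<^sup>2" using s4 t4 by simp
    have gvc: "g \<bullet> v \<ge> c * b\<^sup>2" using hyp' st by simp
    have "(norm (v - c *\<^sub>R g))\<^sup>2 = (norm v)\<^sup>2 - 2 * c * (g \<bullet> v) + c\<^sup>2 * b\<^sup>2"
      unfolding power2_norm_eq_inner using gg
      by (simp add: inner_diff inner_commute power2_eq_square algebra_simps power2_norm_eq_inner)
    also have "\<dots> \<le> 0"
    proof -
      have "c * (c * b\<^sup>2) \<le> c * (g \<bullet> v)" using gvc cp by (intro mult_left_mono) auto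
      then show ?thesis using nv by (simp add: power2_eq_square algebra_simps)
    qed
    finally have "(norm (v - c *\<^sub>R g))\<^sup>2 \<le> 0" .
    then have "norm (v - c *\<^sub>R g) = 0"
      using zero_le_power2[of "norm (v - c *\<^sub>R g)"] by simp
    then show ?thesis by (simp add: c_def a_def b_def)
  qed
qed

definition Gi :: "real^'p^'n \<Rightarrow> real^'n^'n" where
  "Gi x = matrix_inv (x ** transpose x)"

definition pinv :: "real^'p^'n \<Rightarrow> real^'n^'p" where
  "pinv x = transpose x ** Gi x"

lemma inner_transpose: "(transpose A *v z) \<bullet> v = z \<bullet> ((A::real^'a^'b) *v v)"
  by (simp add: dot_lmul_matrix)

lemma null_proj_alt: "null_proj x = mat 1 - pinv x ** x"
  unfolding null_proj_def pinv_def Gi_def by simp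

locale fullrank =
  fixes x :: "real^'p^'n"
  assumes rk: "rank x = CARD('n)"
begin

lemma xt_inj: "transpose x *v v = 0 \<Longrightarrow> v = 0"
proof -
  assume h: "transpose x *v v = 0"
  have "surj ((*v) x)" using rk full_rank_surjective by blast
  then obtain u where u: "x *v u = v" by (metis surjD)
  have "v \<bullet> v = v \<bullet> (x *v u)" using u by simp
  also have "\<dots> = (transpose x *v v) \<bullet> u" by (rule inner_transpose[symmetric])
  also have "\<dots> = 0" using h by simp
  finally show "v = 0" by simp
qed

lemma G_invertible: "invertible (x ** transpose x)"
proof -
  have "inj ((*v) (x ** transpose x))"
  proof (rule injI)
    fix a b assume "(x ** transpose x) *v a = (x ** transpose x) *v b"
    then have "(x ** transpose x) *v (a - b) = 0" by (simp add: matrix_vector_mult_diff_distrib)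
    then have "(a - b) \<bullet> ((x ** transpose x) *v (a - b)) = 0" by simp
    then have "(transpose x *v (a - b)) \<bullet> (transpose x *v (a - b)) = 0"
      by (simp add: inner_transpose[symmetric] matrix_vector_mul_assoc[symmetric])
    then have "transpose x *v (a - b) = 0" by simp
    then have "a - b = 0" by (rule xt_inj)
    then show "a = b" by simp
  qed
  then have "rank (x ** transpose x) = CARD('n)" using full_rank_injective by blast
  then have "det (x ** transpose x) \<noteq> 0" by (simp add: det_eq_0_rank)
  then show ?thesis using invertible_det_nz by blast
qed

lemma GGi: "(x ** transpose x) ** Gi x = mat 1" "Gi x ** (x ** transpose x) = mat 1"
  unfolding Gi_def using matrix_inv_both[OF G_invertible] by auto

lemma Gi_sym: "transpose (Gi x) = Gi x"
proof -
  have "transpose (Gi x) ** (x ** transpose x) = mat 1"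
  proof -
    have "transpose ((x ** transpose x) ** Gi x) = mat 1" using GGi by simp
    then show ?thesis by (simp add: matrix_transpose_mul)
  qed
  then have "transpose (Gi x) = transpose (Gi x) ** ((x ** transpose x) ** Gi x)"
    using GGi by simp
  also have "\<dots> = Gi x" using \<open>transpose (Gi x) ** (x ** transpose x) = mat 1\<close>
    by (simp add: matrix_mul_assoc)
  finally show ?thesis .
qed

lemma x_pinv: "x ** pinv x = mat 1"
  unfolding pinv_def using GGi by (simp add: matrix_mul_assoc)

lemma x_pinv_v: "x *v (pinv x *v y) = y"
  by (simp add: matrix_vector_mul_assoc x_pinv)

lemma null_proj_v: "null_proj x *v u = u - pinv x *v (x *v u)"
  unfolding null_proj_alt by (simp add: matrix_vector_mult_diff_rdistrib matrix_vector_mul_assoc)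

lemma x_null_proj: "x *v (null_proj x *v u) = 0"
  unfolding null_proj_v by (simp add: matrix_vector_mult_diff_distrib x_pinv_v)

lemma null_proj_fix: "x *v v = 0 \<Longrightarrow> null_proj x *v v = v"
  unfolding null_proj_v by simp

lemma pinv_orth: "x *v v = 0 \<Longrightarrow> (pinv x *v y) \<bullet> v = 0"
proof -
  assume "x *v v = 0"
  have "(pinv x *v y) \<bullet> v = (transpose x *v (Gi x *v y)) \<bullet> v"
    unfolding pinv_def by (simp add: matrix_vector_mul_assoc)
  also have "\<dots> = (Gi x *v y) \<bullet> (x *v v)" by (rule inner_transpose)
  also have "\<dots> = 0" using \<open>x *v v = 0\<close> by simp
  finally show ?thesis .
qed

lemma null_proj_sym: "transpose (null_proj x) = null_proj x"
proof -
  have "transpose (pinv x ** x) = pinv x ** x"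
    unfolding pinv_def by (simp add: matrix_transpose_mul Gi_sym matrix_mul_assoc)
  then show ?thesis unfolding null_proj_alt
    by (simp add: vec_eq_iff transpose_def mat_def)
qed

lemma null_proj_inner: "w \<bullet> (null_proj x *v v) = (null_proj x *v w) \<bullet> v"
proof -
  have "w \<bullet> (null_proj x *v v) = (transpose (null_proj x) *v w) \<bullet> v"
    by (rule inner_transpose[symmetric])
  then show ?thesis using null_proj_sym by simp
qed

lemma bias_min_formula:
  assumes "is_bias_min x y w \<theta>"
  shows "\<theta> = pinv x *v y + cc (norm (pinv x *v y)) (norm (null_proj x *v w)) *\<^sub>R (null_proj x *v w)"
proof -
  define r where "r = pinv x *v y"
  define g where "g = null_proj x *v w"
  define c where "c = cc (norm r) (norm g)"
  define v where "v = \<theta> - r"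
  have feas: "y = x *v \<theta>" and opt: "\<And>\<theta>'. y = x *v \<theta>' \<Longrightarrow>
      norm \<theta> powr (3/2) - w \<bullet> \<theta> \<le> norm \<theta>' powr (3/2) - w \<bullet> \<theta>'"
    using assms unfolding is_bias_min_def by auto
  have xg: "x *v g = 0" unfolding g_def by (rule x_null_proj)
  have xr: "x *v r = y" unfolding r_def by (rule x_pinv_v)
  have xv: "x *v v = 0" unfolding v_def using feas xr by (simp add: matrix_vector_mult_diff_distrib)
  have "y = x *v (r + c *\<^sub>R g)" using xr xg by (simp add: matrix_vector_right_distrib matrix_vector_mult_scaleR)
  from opt[OF this] have H: "norm \<theta> powr (3/2) - w \<bullet> \<theta> \<le> norm (r + c *\<^sub>R g) powr (3/2) - w \<bullet> (r + c *\<^sub>R g)" .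
  have wv: "w \<bullet> v = g \<bullet> v"
    using null_proj_inner[of w v] null_proj_fix[OF xv] unfolding g_def by simp
  have wg: "w \<bullet> g = g \<bullet> g"
    using null_proj_inner[of w g] null_proj_fix[OF xg] unfolding g_def by simp
  have th: "\<theta> = r + v" unfolding v_def by simp
  have H2: "norm (r + v) powr (3/2) - g \<bullet> v \<le> norm (r + cc (norm r) (norm g) *\<^sub>R g) powr (3/2) - cc (norm r) (norm g) * (g \<bullet> g)"
    using H unfolding th c_def by (simp add: inner_add_right wv wg)
  have "v = cc (norm r) (norm g) *\<^sub>R g"
    by (rule core_unique[OF _ _ H2]) (simp_all add: r_def pinv_orth xv xg)
  then show ?thesis using th unfolding r_def g_def by simp
qed

end

locale dsetup =
  fixes D :: "((real^'p) \<times> real) measure" and \<theta>s :: "real^'p" and \<sigma> :: real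
  assumes D: "prob_space D" "sets D = sets borel"
    and mom_x: "integrable D (\<lambda>z. (norm (fst z))\<^sup>2)"
    and mom_y: "integrable D (\<lambda>z. (snd z)\<^sup>2)"
    and noise_mean: "AE z in D. real_cond_exp D (vimage_algebra (space D) fst borel)
                        (\<lambda>z. snd z - fst z \<bullet> \<theta>s) z = 0"
    and noise_var: "AE z in D. real_cond_exp D (vimage_algebra (space D) fst borel)
                        (\<lambda>z. (snd z - fst z \<bullet> \<theta>s)\<^sup>2) z = \<sigma>\<^sup>2"
begin

interpretation P: prob_space D by (rule D(1))

lemma setsD[measurable_cong]: "sets D = sets (borel \<Otimes>\<^sub>M borel)" by (subst borel_prod) (rule D(2))

definition e :: "(real^'p) \<times> real \<Rightarrow> real" where "e z = snd z - fst z \<bullet> \<theta>s"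

lemma e_fun: "e = (\<lambda>z. snd z - fst z \<bullet> \<theta>s)" by (rule ext) (simp add: e_def)

lemma e_meas[measurable]: "e \<in> borel_measurable D"
  unfolding e_def by measurable

abbreviation "F \<equiv> vimage_algebra (space D) fst (borel :: (real^'p) measure)"

lemma sfs: "sigma_finite_subalgebra D F"
proof -
  have "subalgebra D F"
    unfolding subalgebra_def
  proof
    show "sets F \<subseteq> sets D"
      by (rule sets_image_in_sets) (auto)
  qed simp
  then have "finite_measure_subalgebra D F"
    unfolding finite_measure_subalgebra_def finite_measure_subalgebra_axioms_def
    using P.finite_measure_axioms by simp
  then show ?thesis by (rule finite_measure_subalgebra_is_sigma_finite)
qed

lemma fst_F_meas: "h \<in> borel_measurable borel \<Longrightarrow> (\<lambda>z. h (fst z)) \<in> borel_measurable F"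
proof -
  assume h: "h \<in> borel_measurable borel"
  have "fst \<in> measurable F borel" by (rule measurable_vimage_algebra1) simp
  from measurable_compose[OF this h] show ?thesis .
qed

lemma sq_int_fst: "integrable D (\<lambda>z. (fst z \<bullet> u)\<^sup>2)"
proof (rule Bochner_Integration.integrable_bound[OF integrable_mult_right[OF mom_x, of "(norm u)\<^sup>2"]])
  show "(\<lambda>z. (fst z \<bullet> u)\<^sup>2) \<in> borel_measurable D" by measurable
  show "AE z in D. norm ((fst z \<bullet> u)\<^sup>2) \<le> norm ((norm u)\<^sup>2 * (norm (fst z))\<^sup>2)"
  proof (rule AE_I2)
    fix z :: "(real^'p) \<times> real"
    have "\<bar>fst z \<bullet> u\<bar> \<le> norm (fst z) * norm u" by (rule Cauchy_Schwarz_ineq2)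
    then have "(fst z \<bullet> u)\<^sup>2 \<le> (norm (fst z) * norm u)\<^sup>2"
      by (metis abs_ge_zero power2_abs power_mono)
    then show "norm ((fst z \<bullet> u)\<^sup>2) \<le> norm ((norm u)\<^sup>2 * (norm (fst z))\<^sup>2)"
      by (simp add: power_mult_distrib mult.commute)
  qed
qed

lemma e_sq_int: "integrable D (\<lambda>z. (e z)\<^sup>2)"
proof (rule Bochner_Integration.integrable_bound[OF Bochner_Integration.integrable_add[OF integrable_mult_right[OF mom_y, of 2] integrable_mult_right[OF sq_int_fst[of \<theta>s], of 2]]])
  show "(\<lambda>z. (e z)\<^sup>2) \<in> borel_measurable D" by measurable
  show "AE z in D. norm ((e z)\<^sup>2) \<le> norm (2 * (snd z)\<^sup>2 + 2 * (fst z \<bullet> \<theta>s)\<^sup>2)"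
  proof (rule AE_I2)
    fix z :: "(real^'p) \<times> real"
    have "(snd z - fst z \<bullet> \<theta>s)\<^sup>2 \<le> 2 * (snd z)\<^sup>2 + 2 * (fst z \<bullet> \<theta>s)\<^sup>2"
      using zero_le_power2[of "snd z + fst z \<bullet> \<theta>s"]
      by (simp add: power2_eq_square algebra_simps)
    then show "norm ((e z)\<^sup>2) \<le> norm (2 * (snd z)\<^sup>2 + 2 * (fst z \<bullet> \<theta>s)\<^sup>2)"
      unfolding e_def by simp
  qed
qed

lemma e_cond_zero:
  assumes h[measurable]: "h \<in> borel_measurable borel"
    and int: "integrable D (\<lambda>z. h (fst z) * e z)"
  shows "(\<integral>z. h (fst z) * e z \<partial>D) = 0"
proof -
  interpret S: sigma_finite_subalgebra D F by (rule sfs)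
  have "(\<integral>z. h (fst z) * e z \<partial>D) = (\<integral>z. h (fst z) * real_cond_exp D F e z \<partial>D)"
    by (rule S.real_cond_exp_intg(2)[symmetric]) (use int fst_F_meas[OF h] in auto)
  also have "\<dots> = (\<integral>z. 0 \<partial>D)"
    by (rule integral_cong_AE) (use noise_mean in \<open>auto simp: e_fun\<close>)
  finally show ?thesis by simp
qed

lemma e_cond_sq:
  assumes h[measurable]: "h \<in> borel_measurable borel"
    and int: "integrable D (\<lambda>z. h (fst z) * (e z)\<^sup>2)"
  shows "(\<integral>z. h (fst z) * (e z)\<^sup>2 \<partial>D) = \<sigma>\<^sup>2 * (\<integral>z. h (fst z) \<partial>D)"
proof -
  interpret S: sigma_finite_subalgebra D F by (rule sfs)
  have "(\<integral>z. h (fst z) * (e z)\<^sup>2 \<partial>D) = (\<integral>z. h (fst z) * real_cond_exp D F (\<lambda>z. (e z)\<^sup>2) z \<partial>D)"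
    by (rule S.real_cond_exp_intg(2)[symmetric]) (use int fst_F_meas[OF h] in auto)
  also have "\<dots> = (\<integral>z. h (fst z) * \<sigma>\<^sup>2 \<partial>D)"
    by (rule integral_cong_AE) (use noise_var in \<open>auto simp: e_fun\<close>)
  finally show ?thesis by simp
qed

lemma prod_bound_int:
  fixes f g :: "(real^'p) \<times> real \<Rightarrow> real"
  assumes f[measurable]: "f \<in> borel_measurable D" and g[measurable]: "g \<in> borel_measurable D"
    and fi: "integrable D (\<lambda>z. (f z)\<^sup>2)" and gi: "integrable D (\<lambda>z. (g z)\<^sup>2)"
  shows "integrable D (\<lambda>z. f z * g z)"
proof (rule Bochner_Integration.integrable_bound[OF Bochner_Integration.integrable_add[OF fi gi]])
  show "(\<lambda>z. f z * g z) \<in> borel_measurable D" by measurable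
  show "AE z in D. norm (f z * g z) \<le> norm ((f z)\<^sup>2 + (g z)\<^sup>2)"
  proof (rule AE_I2)
    fix z
    have "(\<bar>f z\<bar> - \<bar>g z\<bar>)\<^sup>2 = (f z)\<^sup>2 + (g z)\<^sup>2 - 2 * (\<bar>f z\<bar> * \<bar>g z\<bar>)"
      by (simp add: power2_diff)
    moreover have "(\<bar>f z\<bar> - \<bar>g z\<bar>)\<^sup>2 \<ge> 0" by simp
    moreover have "\<bar>f z\<bar> * \<bar>g z\<bar> \<ge> 0" by simp
    ultimately have "\<bar>f z\<bar> * \<bar>g z\<bar> \<le> (f z)\<^sup>2 + (g z)\<^sup>2" by linarith
    then have "\<bar>f z * g z\<bar> \<le> (f z)\<^sup>2 + (g z)\<^sup>2" by (simp add: abs_mult)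
    then show "norm (f z * g z) \<le> norm ((f z)\<^sup>2 + (g z)\<^sup>2)" by simp
  qed
qed

lemma comp_sq_int: "integrable D (\<lambda>z. (fst z $ i)\<^sup>2)"
  unfolding cart_eq_inner_axis[of "fst _" i] by (rule sq_int_fst)

lemma comp_prod_int: "integrable D (\<lambda>z. fst z $ i * fst z $ j)"
  by (rule prod_bound_int) (simp_all add: comp_sq_int)

lemma lin_e_int: "integrable D (\<lambda>z. (fst z \<bullet> u) * e z)"
  by (rule prod_bound_int) (simp_all add: sq_int_fst e_sq_int)

lemma quad_integral: "(\<integral>z. (fst z \<bullet> u)\<^sup>2 \<partial>D) = u \<bullet> (Sigma_mat D *v u)"
proof -
  have eq: "\<And>z::(real^'p) \<times> real. (fst z \<bullet> u)\<^sup>2 = (\<Sum>i\<in>UNIV. \<Sum>j\<in>UNIV. (u$i * u$j) * (fst z $ i * fst z $ j))"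
  proof -
    fix z :: "(real^'p) \<times> real"
    have "(fst z \<bullet> u)\<^sup>2 = (\<Sum>i\<in>UNIV. fst z $ i * u $ i) * (\<Sum>j\<in>UNIV. fst z $ j * u $ j)"
      by (simp add: inner_vec_def power2_eq_square)
    also have "\<dots> = (\<Sum>i\<in>UNIV. \<Sum>j\<in>UNIV. (u$i * u$j) * (fst z $ i * fst z $ j))"
      by (simp add: sum_product algebra_simps)
    finally show "?thesis z" .
  qed
  have "(\<integral>z. (fst z \<bullet> u)\<^sup>2 \<partial>D) = (\<integral>z. (\<Sum>i\<in>UNIV. \<Sum>j\<in>UNIV. (u$i * u$j) * (fst z $ i * fst z $ j)) \<partial>D)"
    by (simp only: eq)
  also have "\<dots> = (\<Sum>i\<in>UNIV. \<Sum>j\<in>UNIV. (u$i * u$j) * (\<integral>z. fst z $ i * fst z $ j \<partial>D))"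
    by (simp add: comp_prod_int Bochner_Integration.integral_sum)
  also have "\<dots> = u \<bullet> (Sigma_mat D *v u)"
    by (simp add: inner_vec_def matrix_vector_mult_def Sigma_mat_def sum_distrib_left algebra_simps)
  finally show ?thesis .
qed

lemma risk_formula: "Risk D \<theta>s \<theta> = (\<theta> - \<theta>s) \<bullet> (Sigma_mat D *v (\<theta> - \<theta>s))"
proof -
  define u where "u = \<theta> - \<theta>s"
  have pt: "\<And>z. (snd z - fst z \<bullet> \<theta>)\<^sup>2 - (snd z - fst z \<bullet> \<theta>s)\<^sup>2 = (fst z \<bullet> u)\<^sup>2 - 2 * ((fst z \<bullet> u) * e z)"
    unfolding u_def e_def by (simp add: inner_diff_right power2_eq_square algebra_simps)
  have "Risk D \<theta>s \<theta> = (\<integral>z. (fst z \<bullet> u)\<^sup>2 - 2 * ((fst z \<bullet> u) * e z) \<partial>D)"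
    unfolding Risk_def pt ..
  also have "\<dots> = (\<integral>z. (fst z \<bullet> u)\<^sup>2 \<partial>D) - 2 * (\<integral>z. (fst z \<bullet> u) * e z \<partial>D)"
    using sq_int_fst lin_e_int by simp
  also have "(\<integral>z. (fst z \<bullet> u) * e z \<partial>D) = 0"
    by (rule e_cond_zero[where h="\<lambda>x. x \<bullet> u"]) (simp_all add: lin_e_int)
  finally show ?thesis by (simp add: quad_integral u_def)
qed

lemma q_nonneg: "u \<bullet> (Sigma_mat D *v u) \<ge> 0"
  using quad_integral[of u] by (metis integral_nonneg_AE AE_I2 zero_le_power2)

lemma Sig_sym: "transpose (Sigma_mat D) = Sigma_mat D"
  by (simp add: vec_eq_iff transpose_def Sigma_mat_def mult.commute)

end

abbreviation B2 where "B2 \<equiv> (borel \<Otimes>\<^sub>M borel)"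

locale msetup = dsetup D \<theta>s \<sigma>
  for D :: "((real^'p) \<times> real) measure" and \<theta>s \<sigma> +
  fixes M :: "'w measure"
    and X :: "'w \<Rightarrow> real^'p^'n"
    and Y :: "'w \<Rightarrow> real^'n"
  assumes M: "prob_space M"
    and measX[measurable]: "X \<in> borel_measurable M" and measY[measurable]: "Y \<in> borel_measurable M"
    and iid: "prob_space.indep_vars M (\<lambda>_. borel) (\<lambda>i \<omega>. (X \<omega> $ i, Y \<omega> $ i)) UNIV"
    and ident: "\<And>i. distr M borel (\<lambda>\<omega>. (X \<omega> $ i, Y \<omega> $ i)) = D"
begin

sublocale PM: prob_space M by (rule M)

definition Z :: "'n \<Rightarrow> 'w \<Rightarrow> (real^'p) \<times> real" where "Z i \<omega> = (X \<omega> $ i, Y \<omega> $ i)"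

definition Rst :: "'n \<Rightarrow> 'w \<Rightarrow> (real^'p^'n) \<times> (real^'n)" where
  "Rst i \<omega> = ((\<chi> j. if j = i then 0 else X \<omega> $ j), (\<chi> j. if j = i then 0 else Y \<omega> $ j))"

definition comb :: "'n \<Rightarrow> real^'p \<Rightarrow> (real^'p^'n) \<times> (real^'n) \<Rightarrow> real^'p^'n" where
  "comb i u b = (\<chi> j. if j = i then u else fst b $ j)"

definition ej :: "'n \<Rightarrow> (real^'p^'n) \<times> (real^'n) \<Rightarrow> real" where
  "ej j b = e (fst b $ j, snd b $ j)"

lemma space_B2[simp]: "space B2 = UNIV" by (simp add: space_pair_measure)

lemma e_B2[measurable]: "e \<in> borel_measurable B2"
  unfolding e_fun by measurable

lemma Z_meas[measurable]: "Z i \<in> measurable M B2"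
  unfolding Z_def by measurable

lemma Rst_meas[measurable]: "Rst i \<in> measurable M B2"
  unfolding Rst_def
  apply (intro measurable_Pair meas_vec_lambda)
  subgoal for j by (cases "j = i") auto
  subgoal for j by (cases "j = i") auto
  done

lemma comb_meas[measurable (raw)]:
  assumes [measurable]: "u \<in> borel_measurable N" "b \<in> measurable N B2"
  shows "(\<lambda>x. comb i (u x) (b x)) \<in> borel_measurable N"
  unfolding comb_def
  apply (intro meas_vec_lambda)
  subgoal for j by (cases "j = i") auto
  done

lemma comb_fix_meas[measurable]: "(\<lambda>u. comb i u b) \<in> borel_measurable borel"
  by (rule comb_meas[where u="\<lambda>u. u" and b="\<lambda>_. b", simplified]) simp

lemma ej_meas[measurable]: "ej j \<in> borel_measurable B2"
  unfolding ej_def by measurable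

lemma X_comb: "X \<omega> = comb i (fst (Z i \<omega>)) (Rst i \<omega>)"
  by (simp add: vec_eq_iff comb_def Z_def Rst_def)

lemma ej_Rst: "j \<noteq> i \<Longrightarrow> ej j (Rst i \<omega>) = e (Z j \<omega>)"
  by (simp add: ej_def Rst_def Z_def)

lemma distr_Z: "distr M B2 (Z i) = D"
  using ident[of i] unfolding Z_def[abs_def] by (simp add: borel_prod)

definition emb :: "'n \<Rightarrow> (real^'p) \<times> real \<Rightarrow> (real^'p^'n) \<times> (real^'n)" where
  "emb i z = ((\<chi> j. if j = i then fst z else 0), (\<chi> j. if j = i then snd z else 0))"

definition unemb :: "'n \<Rightarrow> (real^'p^'n) \<times> (real^'n) \<Rightarrow> (real^'p) \<times> real" where
  "unemb i w = (fst w $ i, snd w $ i)"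

lemma emb_meas[measurable]: "emb i \<in> measurable B2 B2"
  unfolding emb_def
  apply (intro measurable_Pair meas_vec_lambda)
  subgoal for j by (cases "j = i") auto
  subgoal for j by (cases "j = i") auto
  done

lemma unemb_meas[measurable]: "unemb i \<in> measurable B2 B2"
  unfolding unemb_def by measurable

lemma unemb_emb[simp]: "unemb i (emb i z) = z"
  by (simp add: unemb_def emb_def)

definition Zp :: "'n \<Rightarrow> 'w \<Rightarrow> (real^'p^'n) \<times> (real^'n)" where
  "Zp i \<omega> = emb i (Z i \<omega>)"

lemma Zp_meas[measurable]: "Zp i \<in> measurable M B2"
  unfolding Zp_def by measurable

lemma unemb_Zp[simp]: "unemb i (Zp i \<omega>) = Z i \<omega>"
  by (simp add: Zp_def)

definition Dp :: "'n \<Rightarrow> ((real^'p^'n) \<times> (real^'n)) measure" where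
  "Dp i = distr D B2 (emb i)"

lemma distr_Zp: "distr M B2 (Zp i) = Dp i"
proof -
  have "distr M B2 (Zp i) = distr (distr M B2 (Z i)) B2 (emb i)"
    unfolding Zp_def[abs_def] by (subst distr_distr) (auto simp: comp_def)
  then show ?thesis unfolding distr_Z Dp_def .
qed

lemma indep_ZR: "PM.indep_var B2 (Zp i) B2 (Rst i)"
proof -
  have iid2: "PM.indep_vars (\<lambda>_. B2) Z UNIV"
    using iid unfolding Z_def[abs_def] by (simp add: borel_prod)
  have r: "PM.indep_var (Pi\<^sub>M {i} (\<lambda>_. B2)) (\<lambda>\<omega>. restrict (\<lambda>j. Z j \<omega>) {i})
      (Pi\<^sub>M (-{i}) (\<lambda>_. B2)) (\<lambda>\<omega>. restrict (\<lambda>j. Z j \<omega>) (-{i}))"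
    by (rule PM.indep_var_restrict[OF iid2]) auto
  define Y1 where "Y1 = (\<lambda>f::'n \<Rightarrow> (real^'p) \<times> real. emb i (f i))"
  define Y2 where "Y2 = (\<lambda>f::'n \<Rightarrow> (real^'p) \<times> real.
      ((\<chi> j. if j = i then 0 else fst (f j)) :: real^'p^'n, (\<chi> j. if j = i then 0 else snd (f j)) :: real^'n))"
  have m1: "Y1 \<in> measurable (Pi\<^sub>M {i} (\<lambda>_. B2)) B2"
    unfolding Y1_def by measurable
  have m2: "Y2 \<in> measurable (Pi\<^sub>M (-{i}) (\<lambda>_. B2)) B2"
    unfolding Y2_def
    apply (intro measurable_Pair meas_vec_lambda)
    subgoal for j by (cases "j = i") auto
    subgoal for j by (cases "j = i") auto
    done
  have "PM.indep_var B2 (Y1 \<circ> (\<lambda>\<omega>. restrict (\<lambda>j. Z j \<omega>) {i})) B2 (Y2 \<circ> (\<lambda>\<omega>. restrict (\<lambda>j. Z j \<omega>) (-{i})))"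
    by (rule PM.indep_var_compose[OF r m1 m2])
  moreover have "Y1 \<circ> (\<lambda>\<omega>. restrict (\<lambda>j. Z j \<omega>) {i}) = Zp i"
    by (simp add: Y1_def fun_eq_iff Zp_def)
  moreover have "Y2 \<circ> (\<lambda>\<omega>. restrict (\<lambda>j. Z j \<omega>) (-{i})) = Rst i"
    by (simp add: Y2_def fun_eq_iff Rst_def Z_def vec_eq_iff)
  ultimately show ?thesis by simp
qed

definition mu :: "'n \<Rightarrow> ((real^'p^'n) \<times> (real^'n)) measure" where
  "mu i = distr M B2 (Rst i)"

lemma mu_prob: "prob_space (mu i)"
  unfolding mu_def by (rule PM.prob_space_distr) simp

lemma Dp_prob: "prob_space (Dp i)"
  unfolding Dp_def by (rule prob_space.prob_space_distr[OF D(1)]) simp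

lemma joint: "distr M (B2 \<Otimes>\<^sub>M B2) (\<lambda>\<omega>. (Zp i \<omega>, Rst i \<omega>)) = Dp i \<Otimes>\<^sub>M mu i"
  using indep_ZR[of i] unfolding PM.indep_var_distribution_eq mu_def distr_Zp by simp

lemma fub:
  fixes f :: "(real^'p) \<times> real \<Rightarrow> (real^'p^'n) \<times> (real^'n) \<Rightarrow> real"
  assumes fm[measurable]: "(\<lambda>p. f (fst p) (snd p)) \<in> borel_measurable (B2 \<Otimes>\<^sub>M B2)"
    and int: "integrable M (\<lambda>\<omega>. f (Z i \<omega>) (Rst i \<omega>))"
  shows "(\<integral>\<omega>. f (Z i \<omega>) (Rst i \<omega>) \<partial>M) = (\<integral>b. (\<integral>z. f z b \<partial>D) \<partial>mu i)"
proof -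
  interpret Q: prob_space "mu i" by (rule mu_prob)
  interpret Q2: prob_space "Dp i" by (rule Dp_prob)
  interpret PP: pair_sigma_finite "Dp i" "mu i" by unfold_locales
  define F where "F = (\<lambda>p. f (unemb i (fst p)) (snd p))"
  have Fm[measurable]: "F \<in> borel_measurable (B2 \<Otimes>\<^sub>M B2)"
  proof -
    have "(\<lambda>p. (unemb i (fst p), snd p)) \<in> measurable (B2 \<Otimes>\<^sub>M B2) (B2 \<Otimes>\<^sub>M B2)" by measurable
    from measurable_compose[OF this fm] show ?thesis unfolding F_def by simp
  qed
  have gm: "(\<lambda>\<omega>. (Zp i \<omega>, Rst i \<omega>)) \<in> measurable M (B2 \<Otimes>\<^sub>M B2)" by measurable
  have "integrable (distr M (B2 \<Otimes>\<^sub>M B2) (\<lambda>\<omega>. (Zp i \<omega>, Rst i \<omega>))) F"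
    using int by (subst integrable_distr_eq[OF gm Fm]) (simp add: F_def)
  then have intP: "integrable (Dp i \<Otimes>\<^sub>M mu i) (\<lambda>(w, b). F (w, b))" unfolding joint by simp
  have "(\<integral>\<omega>. f (Z i \<omega>) (Rst i \<omega>) \<partial>M) = integral\<^sup>L (distr M (B2 \<Otimes>\<^sub>M B2) (\<lambda>\<omega>. (Zp i \<omega>, Rst i \<omega>))) F"
    by (subst integral_distr[OF gm Fm]) (simp add: F_def)
  also have "\<dots> = integral\<^sup>L (Dp i \<Otimes>\<^sub>M mu i) (\<lambda>(w, b). F (w, b))" unfolding joint by simp
  also have "\<dots> = (\<integral>b. (\<integral>w. F (w, b) \<partial>Dp i) \<partial>mu i)"
    by (rule PP.integral_snd[OF intP, symmetric])
  also have "\<dots> = (\<integral>b. (\<integral>z. f z b \<partial>D) \<partial>mu i)"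
  proof (rule Bochner_Integration.integral_cong[OF refl])
    fix b assume b: "b \<in> space (mu i)"
    have "(\<lambda>w. F (w, b)) \<in> borel_measurable B2"
      by (rule measurable_Pair1[OF Fm]) (use b in \<open>simp add: mu_def\<close>)
    then show "(\<integral>w. F (w, b) \<partial>Dp i) = (\<integral>z. f z b \<partial>D)"
      unfolding Dp_def by (subst integral_distr) (auto simp: F_def)
  qed
  finally show ?thesis .
qed

lemma transfer_int: fixes g :: "(real^'p) \<times> real \<Rightarrow> real" shows "g \<in> borel_measurable B2 \<Longrightarrow> integrable D g \<Longrightarrow> integrable M (\<lambda>\<omega>. g (Z i \<omega>))"
  using integrable_distr_eq[OF Z_meas, of g i] distr_Z[of i] by simp

lemma e_int_D: "integrable D e"
  by (rule finite_measure.square_integrable_imp_integrable[OF prob_space.finite_measure[OF D(1)]])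
     (simp_all add: e_sq_int)

lemma eps_int: "integrable M (\<lambda>\<omega>. e (Z i \<omega>))"
  by (rule transfer_int) (simp_all add: e_int_D)

lemma eps_sq_int: "integrable M (\<lambda>\<omega>. (e (Z i \<omega>))\<^sup>2)"
  by (rule transfer_int) (simp_all add: e_sq_int)

lemma bounded_int_M:
  fixes g :: "'w \<Rightarrow> real"
  assumes [measurable]: "g \<in> borel_measurable M" and b: "\<And>\<omega>. \<bar>g \<omega>\<bar> \<le> K"
  shows "integrable M g"
proof -
  have K0: "K \<ge> 0" using b[of undefined] by linarith
  show ?thesis
  proof (rule Bochner_Integration.integrable_bound[of _ "\<lambda>_. K"])
    show "AE x in M. norm (g x) \<le> norm K"
      using b K0 by (intro AE_I2) simp
  qed simp_all
qed

lemma L1: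
  fixes h :: "real^'p^'n \<Rightarrow> real"
  assumes hm[measurable]: "h \<in> borel_measurable borel" and hb: "\<And>x. \<bar>h x\<bar> \<le> K"
  shows "(\<integral>\<omega>. e (Z i \<omega>) * h (X \<omega>) \<partial>M) = 0"
proof -
  have K0: "K \<ge> 0" using hb[of 0] by linarith
  define f where "f = (\<lambda>z b. e z * h (comb i (fst z) b))"
  have fm: "(\<lambda>p. f (fst p) (snd p)) \<in> borel_measurable (B2 \<Otimes>\<^sub>M B2)"
    unfolding f_def by measurable
  have eq: "\<And>\<omega>. e (Z i \<omega>) * h (X \<omega>) = f (Z i \<omega>) (Rst i \<omega>)"
    unfolding f_def by (subst X_comb[of _ i]) simp
  have int: "integrable M (\<lambda>\<omega>. f (Z i \<omega>) (Rst i \<omega>))"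
    unfolding eq[symmetric]
  proof (rule Bochner_Integration.integrable_bound[OF integrable_mult_right[OF integrable_abs[OF eps_int[of i]], of K]])
    show "(\<lambda>\<omega>. e (Z i \<omega>) * h (X \<omega>)) \<in> borel_measurable M" by measurable
    show "AE \<omega> in M. norm (e (Z i \<omega>) * h (X \<omega>)) \<le> norm (K * \<bar>e (Z i \<omega>)\<bar>)"
    proof (rule AE_I2)
      fix \<omega>
      have "\<bar>e (Z i \<omega>)\<bar> * \<bar>h (X \<omega>)\<bar> \<le> \<bar>e (Z i \<omega>)\<bar> * K"
        by (rule mult_left_mono[OF hb]) simp
      then show "norm (e (Z i \<omega>) * h (X \<omega>)) \<le> norm (K * \<bar>e (Z i \<omega>)\<bar>)"
        using K0 by (simp add: abs_mult mult.commute)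
    qed
  qed
  have "(\<integral>\<omega>. e (Z i \<omega>) * h (X \<omega>) \<partial>M) = (\<integral>b. (\<integral>z. f z b \<partial>D) \<partial>mu i)"
    unfolding eq by (rule fub[OF fm int])
  also have "\<dots> = (\<integral>b. 0 \<partial>mu i)"
  proof (rule Bochner_Integration.integral_cong[OF refl])
    fix b
    have hm': "(\<lambda>u. h (comb i u b)) \<in> borel_measurable borel" by measurable
    have "integrable D (\<lambda>z. h (comb i (fst z) b) * e z)"
    proof (rule Bochner_Integration.integrable_bound[OF integrable_mult_right[OF integrable_abs[OF e_int_D], of K]])
      show "(\<lambda>z. h (comb i (fst z) b) * e z) \<in> borel_measurable D" by measurable
      show "AE z in D. norm (h (comb i (fst z) b) * e z) \<le> norm (K * \<bar>e z\<bar>)"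
      proof (rule AE_I2)
        fix z :: "(real^'p) \<times> real"
        have "\<bar>h (comb i (fst z) b)\<bar> * \<bar>e z\<bar> \<le> K * \<bar>e z\<bar>"
          by (rule mult_right_mono[OF hb]) simp
        then show "norm (h (comb i (fst z) b) * e z) \<le> norm (K * \<bar>e z\<bar>)"
          using K0 by (simp add: abs_mult)
      qed
    qed
    from e_cond_zero[OF hm' this] show "(\<integral>z. f z b \<partial>D) = 0"
      unfolding f_def by (simp add: mult.commute)
  qed
  finally show ?thesis by simp
qed

lemma L2:
  fixes h :: "real^'p^'n \<Rightarrow> real"
  assumes hm[measurable]: "h \<in> borel_measurable borel" and hb: "\<And>x. \<bar>h x\<bar> \<le> K" and ij: "j \<noteq> i"
  shows "(\<integral>\<omega>. e (Z i \<omega>) * e (Z j \<omega>) * h (X \<omega>) \<partial>M) = 0"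
proof -
  have K0: "K \<ge> 0" using hb[of 0] by linarith
  define f where "f = (\<lambda>z b. e z * (ej j b * h (comb i (fst z) b)))"
  have fm: "(\<lambda>p. f (fst p) (snd p)) \<in> borel_measurable (B2 \<Otimes>\<^sub>M B2)"
    unfolding f_def by measurable
  have eq: "\<And>\<omega>. e (Z i \<omega>) * e (Z j \<omega>) * h (X \<omega>) = f (Z i \<omega>) (Rst i \<omega>)"
    unfolding f_def using ej_Rst[OF ij] by (subst X_comb[of _ i]) simp
  have int: "integrable M (\<lambda>\<omega>. f (Z i \<omega>) (Rst i \<omega>))"
    unfolding eq[symmetric]
  proof (rule Bochner_Integration.integrable_bound[OF integrable_mult_right[OF Bochner_Integration.integrable_add[OF eps_sq_int[of i] eps_sq_int[of j]], of K]])
    show "(\<lambda>\<omega>. e (Z i \<omega>) * e (Z j \<omega>) * h (X \<omega>)) \<in> borel_measurable M" by measurable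
    show "AE \<omega> in M. norm (e (Z i \<omega>) * e (Z j \<omega>) * h (X \<omega>)) \<le> norm (K * ((e (Z i \<omega>))\<^sup>2 + (e (Z j \<omega>))\<^sup>2))"
    proof (rule AE_I2)
      fix \<omega>
      define a where "a = e (Z i \<omega>)"
      define c where "c = e (Z j \<omega>)"
      have ac: "\<bar>a\<bar> * \<bar>c\<bar> \<le> a\<^sup>2 + c\<^sup>2"
      proof -
        have "(\<bar>a\<bar> - \<bar>c\<bar>)\<^sup>2 = a\<^sup>2 + c\<^sup>2 - 2 * (\<bar>a\<bar> * \<bar>c\<bar>)" by (simp add: power2_diff)
        moreover have "(\<bar>a\<bar> - \<bar>c\<bar>)\<^sup>2 \<ge> 0" by simp
        moreover have "\<bar>a\<bar> * \<bar>c\<bar> \<ge> 0" by simp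
        ultimately show ?thesis by linarith
      qed
      have "\<bar>a\<bar> * \<bar>c\<bar> * \<bar>h (X \<omega>)\<bar> \<le> (a\<^sup>2 + c\<^sup>2) * K"
        by (rule mult_mono[OF ac hb]) simp_all
      then show "norm (e (Z i \<omega>) * e (Z j \<omega>) * h (X \<omega>)) \<le> norm (K * ((e (Z i \<omega>))\<^sup>2 + (e (Z j \<omega>))\<^sup>2))"
        using K0 unfolding a_def[symmetric] c_def[symmetric] by (simp add: abs_mult mult.commute)
    qed
  qed
  have "(\<integral>\<omega>. e (Z i \<omega>) * e (Z j \<omega>) * h (X \<omega>) \<partial>M) = (\<integral>b. (\<integral>z. f z b \<partial>D) \<partial>mu i)"
    unfolding eq by (rule fub[OF fm int])
  also have "\<dots> = (\<integral>b. 0 \<partial>mu i)"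
  proof (rule Bochner_Integration.integral_cong[OF refl])
    fix b
    define K' where "K' = \<bar>ej j b\<bar> * K"
    have hm': "(\<lambda>u. ej j b * h (comb i u b)) \<in> borel_measurable borel" by measurable
    have "integrable D (\<lambda>z. ej j b * h (comb i (fst z) b) * e z)"
    proof (rule Bochner_Integration.integrable_bound[OF integrable_mult_right[OF integrable_abs[OF e_int_D], of K']])
      show "(\<lambda>z. ej j b * h (comb i (fst z) b) * e z) \<in> borel_measurable D" by measurable
      show "AE z in D. norm (ej j b * h (comb i (fst z) b) * e z) \<le> norm (K' * \<bar>e z\<bar>)"
      proof (rule AE_I2)
        fix z :: "(real^'p) \<times> real"
        have "\<bar>ej j b\<bar> * \<bar>h (comb i (fst z) b)\<bar> \<le> K'"
          unfolding K'_def by (rule mult_left_mono[OF hb]) simp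
        then have "\<bar>ej j b\<bar> * \<bar>h (comb i (fst z) b)\<bar> * \<bar>e z\<bar> \<le> K' * \<bar>e z\<bar>"
          by (rule mult_right_mono) simp
        moreover have "K' \<ge> 0" unfolding K'_def using K0 by simp
        ultimately show "norm (ej j b * h (comb i (fst z) b) * e z) \<le> norm (K' * \<bar>e z\<bar>)"
          by (simp add: abs_mult)
      qed
    qed
    from e_cond_zero[OF hm' this] show "(\<integral>z. f z b \<partial>D) = 0"
      unfolding f_def by (simp add: ac_simps)
  qed
  finally show ?thesis by simp
qed

lemma L3:
  fixes h :: "real^'p^'n \<Rightarrow> real"
  assumes hm[measurable]: "h \<in> borel_measurable borel" and hb: "\<And>x. \<bar>h x\<bar> \<le> K"
  shows "(\<integral>\<omega>. (e (Z i \<omega>))\<^sup>2 * h (X \<omega>) \<partial>M) = \<sigma>\<^sup>2 * (\<integral>\<omega>. h (X \<omega>) \<partial>M)"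
proof -
  have K0: "K \<ge> 0" using hb[of 0] by linarith
  define f where "f = (\<lambda>z b. (e z)\<^sup>2 * h (comb i (fst z) b))"
  define g where "g = (\<lambda>(z::(real^'p) \<times> real) b. h (comb i (fst z) b))"
  have fm: "(\<lambda>p. f (fst p) (snd p)) \<in> borel_measurable (B2 \<Otimes>\<^sub>M B2)"
    unfolding f_def by measurable
  have gm: "(\<lambda>p. g (fst p) (snd p)) \<in> borel_measurable (B2 \<Otimes>\<^sub>M B2)"
    unfolding g_def by measurable
  have eq: "\<And>\<omega>. (e (Z i \<omega>))\<^sup>2 * h (X \<omega>) = f (Z i \<omega>) (Rst i \<omega>)"
    unfolding f_def by (subst X_comb[of _ i]) simp
  have eqg: "\<And>\<omega>. h (X \<omega>) = g (Z i \<omega>) (Rst i \<omega>)"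
    unfolding g_def by (subst X_comb[of _ i]) simp
  have int: "integrable M (\<lambda>\<omega>. f (Z i \<omega>) (Rst i \<omega>))"
    unfolding eq[symmetric]
  proof (rule Bochner_Integration.integrable_bound[OF integrable_mult_right[OF eps_sq_int[of i], of K]])
    show "(\<lambda>\<omega>. (e (Z i \<omega>))\<^sup>2 * h (X \<omega>)) \<in> borel_measurable M" by measurable
    show "AE \<omega> in M. norm ((e (Z i \<omega>))\<^sup>2 * h (X \<omega>)) \<le> norm (K * (e (Z i \<omega>))\<^sup>2)"
    proof (rule AE_I2)
      fix \<omega>
      have "(e (Z i \<omega>))\<^sup>2 * \<bar>h (X \<omega>)\<bar> \<le> (e (Z i \<omega>))\<^sup>2 * K"
        by (rule mult_left_mono[OF hb]) simp
      then show "norm ((e (Z i \<omega>))\<^sup>2 * h (X \<omega>)) \<le> norm (K * (e (Z i \<omega>))\<^sup>2)"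
        using K0 by (simp add: abs_mult mult.commute)
    qed
  qed
  have intg: "integrable M (\<lambda>\<omega>. g (Z i \<omega>) (Rst i \<omega>))"
    unfolding eqg[symmetric] by (rule bounded_int_M[OF _ hb]) measurable
  have "(\<integral>\<omega>. (e (Z i \<omega>))\<^sup>2 * h (X \<omega>) \<partial>M) = (\<integral>b. (\<integral>z. f z b \<partial>D) \<partial>mu i)"
    unfolding eq by (rule fub[OF fm int])
  also have "\<dots> = (\<integral>b. \<sigma>\<^sup>2 * (\<integral>z. g z b \<partial>D) \<partial>mu i)"
  proof (rule Bochner_Integration.integral_cong[OF refl])
    fix b
    have hm': "(\<lambda>u. h (comb i u b)) \<in> borel_measurable borel" by measurable
    have "integrable D (\<lambda>z. h (comb i (fst z) b) * (e z)\<^sup>2)"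
    proof (rule Bochner_Integration.integrable_bound[OF integrable_mult_right[OF e_sq_int, of K]])
      show "(\<lambda>z. h (comb i (fst z) b) * (e z)\<^sup>2) \<in> borel_measurable D" by measurable
      show "AE z in D. norm (h (comb i (fst z) b) * (e z)\<^sup>2) \<le> norm (K * (e z)\<^sup>2)"
      proof (rule AE_I2)
        fix z :: "(real^'p) \<times> real"
        have "\<bar>h (comb i (fst z) b)\<bar> * (e z)\<^sup>2 \<le> K * (e z)\<^sup>2"
          by (rule mult_right_mono[OF hb]) simp
        then show "norm (h (comb i (fst z) b) * (e z)\<^sup>2) \<le> norm (K * (e z)\<^sup>2)"
          using K0 by (simp add: abs_mult)
      qed
    qed
    from e_cond_sq[OF hm' this] show "(\<integral>z. f z b \<partial>D) = \<sigma>\<^sup>2 * (\<integral>z. g z b \<partial>D)"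
      unfolding f_def g_def by (simp add: mult.commute)
  qed
  also have "\<dots> = \<sigma>\<^sup>2 * (\<integral>b. (\<integral>z. g z b \<partial>D) \<partial>mu i)" by simp
  also have "(\<integral>b. (\<integral>z. g z b \<partial>D) \<partial>mu i) = (\<integral>\<omega>. h (X \<omega>) \<partial>M)"
    unfolding eqg by (rule fub[OF gm intg, symmetric])
  finally show ?thesis .
qed

end

definition pinvm :: "real^'p^'n \<Rightarrow> real^'n^'p" where
  "pinvm x = transpose x ** minv (x ** transpose x)"

definition Pm :: "real^'p^'n \<Rightarrow> real^'p^'p" where
  "Pm x = mat 1 - pinvm x ** x"

lemma pinvm_meas[measurable (raw)]:
  assumes [measurable]: "f \<in> borel_measurable N"
  shows "(\<lambda>w. pinvm (f w)) \<in> borel_measurable N"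
proof -
  have [measurable]: "(\<lambda>w. f w ** transpose (f w)) \<in> borel_measurable N" by measurable
  have [measurable]: "(\<lambda>w. minv (f w ** transpose (f w))) \<in> borel_measurable N"
    by (rule meas_minv) measurable
  show ?thesis unfolding pinvm_def by measurable
qed

lemma meas_mat1[measurable]: "(\<lambda>w. mat 1 :: real^'a^'a) \<in> borel_measurable N"
  by simp

lemma meas_matdiff[measurable (raw)]:
  fixes A B :: "'b \<Rightarrow> real^'a^'c"
  shows "A \<in> borel_measurable N \<Longrightarrow> B \<in> borel_measurable N \<Longrightarrow> (\<lambda>w. A w - B w) \<in> borel_measurable N"
  by (rule borel_measurable_diff)

lemma Pm_meas[measurable (raw)]:
  assumes [measurable]: "f \<in> borel_measurable N"
  shows "(\<lambda>w. Pm (f w)) \<in> borel_measurable N"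
  unfolding Pm_def by measurable

context fullrank
begin

lemma pinvm_eq: "pinvm x = pinv x"
  unfolding pinvm_def pinv_def Gi_def using matrix_inv_minv[OF G_invertible] by simp

lemma Pm_eq: "Pm x = null_proj x"
  unfolding Pm_def null_proj_alt pinvm_eq ..

lemma quad_decomp:
  fixes S :: "real^'p^'p" and y :: "real^'n" and \<theta>s :: "real^'p"
  assumes Ssym: "transpose S = S"
  defines "eps \<equiv> y - x *v \<theta>s"
  shows "(pinv x *v y - \<theta>s) \<bullet> (S *v (pinv x *v y - \<theta>s)) =
      (null_proj x *v \<theta>s) \<bullet> (S *v (null_proj x *v \<theta>s))
      - 2 * (eps \<bullet> (transpose (pinv x) *v (S *v (null_proj x *v \<theta>s))))
      + eps \<bullet> ((transpose (pinv x) ** S ** pinv x) *v eps)"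
proof -
  define u where "u = null_proj x *v \<theta>s"
  define w where "w = pinv x *v eps"
  have d: "pinv x *v y - \<theta>s = w - u"
    unfolding w_def u_def eps_def null_proj_v
    by (simp add: matrix_vector_mult_diff_distrib)
  have Ssym': "\<And>a b. a \<bullet> (S *v b) = b \<bullet> (S *v a)"
  proof -
    fix a b :: "real^'p"
    have "a \<bullet> (S *v b) = (transpose S *v a) \<bullet> b" by (rule inner_transpose[symmetric])
    then show "a \<bullet> (S *v b) = b \<bullet> (S *v a)" using Ssym by (simp add: inner_commute)
  qed
  have q: "(w - u) \<bullet> (S *v (w - u)) = u \<bullet> (S *v u) - 2 * (u \<bullet> (S *v w)) + w \<bullet> (S *v w)"
    using Ssym'[of w u] by (simp add: matrix_vector_mult_diff_distrib inner_diff_left inner_diff_right)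
  have c1: "u \<bullet> (S *v w) = eps \<bullet> (transpose (pinv x) *v (S *v u))"
  proof -
    have "u \<bullet> (S *v w) = (S *v u) \<bullet> w" using Ssym'[of u w] by (simp add: inner_commute)
    also have "\<dots> = (transpose (pinv x) *v (S *v u)) \<bullet> eps"
      unfolding w_def by (rule inner_transpose[symmetric])
    also have "\<dots> = eps \<bullet> (transpose (pinv x) *v (S *v u))" by (rule inner_commute)
    finally show ?thesis .
  qed
  have c2: "w \<bullet> (S *v w) = eps \<bullet> ((transpose (pinv x) ** S ** pinv x) *v eps)"
  proof -
    have "w \<bullet> (S *v w) = (pinv x *v eps) \<bullet> (S *v (pinv x *v eps))" unfolding w_def ..
    also have "\<dots> = (transpose (pinv x) *v (S *v (pinv x *v eps))) \<bullet> eps"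
      by (subst inner_transpose) (rule inner_commute)
    also have "\<dots> = eps \<bullet> (transpose (pinv x) *v (S *v (pinv x *v eps)))"
      by (rule inner_commute)
    also have "\<dots> = eps \<bullet> ((transpose (pinv x) ** S ** pinv x) *v eps)"
      by (simp add: matrix_vector_mul_assoc matrix_mul_assoc)
    finally show ?thesis .
  qed
  have "(pinv x *v y - \<theta>s) \<bullet> (S *v (pinv x *v y - \<theta>s)) = u \<bullet> (S *v u) - 2 * (eps \<bullet> (transpose (pinv x) *v (S *v u))) + eps \<bullet> ((transpose (pinv x) ** S ** pinv x) *v eps)"
    unfolding d q c1 c2 ..
  then show ?thesis unfolding u_def .
qed

lemma B_eq:
  fixes S :: "real^'p^'p"
  shows "\<theta> \<bullet> (B_mat S x *v \<theta>) = (null_proj x *v \<theta>) \<bullet> (S *v (null_proj x *v \<theta>))"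
proof -
  have "\<theta> \<bullet> (B_mat S x *v \<theta>) = \<theta> \<bullet> (null_proj x *v (S *v (null_proj x *v \<theta>)))"
    unfolding B_mat_def by (simp add: matrix_vector_mul_assoc matrix_mul_assoc)
  also have "\<dots> = (transpose (null_proj x) *v \<theta>) \<bullet> (S *v (null_proj x *v \<theta>))"
    by (rule inner_transpose[symmetric])
  finally show ?thesis using null_proj_sym by simp
qed

lemma C_eq:
  fixes S :: "real^'p^'p"
  shows "C_mat S x = transpose (pinv x) ** S ** pinv x"
  unfolding C_mat_def pinv_def Gi_def[symmetric] by (simp add: matrix_transpose_mul Gi_sym matrix_mul_assoc)

end

lemma diag_quad:
  fixes A :: "real^'n^'p" and S :: "real^'p^'p"
  shows "(transpose A ** S ** A) $ i $ i = (A *v axis i 1) \<bullet> (S *v (A *v axis i 1))"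
proof -
  have col: "\<And>B::real^'n^'n. (B *v axis i 1) $ i = B $ i $ i"
  proof -
    fix B :: "real^'n^'n"
    have "(B *v axis i 1) $ i = (\<Sum>j\<in>UNIV. B $ i $ j * (if j = i then 1 else 0))"
      by (simp add: matrix_vector_mult_def axis_def)
    also have "\<dots> = B $ i $ i" by (simp add: if_distrib cong: if_cong)
    finally show "(B *v axis i 1) $ i = B $ i $ i" .
  qed
  have "(transpose A ** S ** A) $ i $ i = axis i 1 \<bullet> ((transpose A ** S ** A) *v axis i 1)"
    by (simp add: inner_axis' col)
  also have "\<dots> = axis i 1 \<bullet> (transpose A *v (S *v (A *v axis i 1)))"
    by (simp add: matrix_vector_mul_assoc matrix_mul_assoc)
  also have "\<dots> = (S *v (A *v axis i 1)) \<bullet> (A *v axis i 1)"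
    by (subst inner_commute) (rule inner_transpose)
  also have "\<dots> = (A *v axis i 1) \<bullet> (S *v (A *v axis i 1))"
    by (rule inner_commute)
  finally show ?thesis .
qed

context msetup
begin

lemma I1:
  fixes h :: "real^'p^'n \<Rightarrow> real"
  assumes hm[measurable]: "h \<in> borel_measurable borel" and hb: "\<And>x. \<bar>h x\<bar> \<le> K"
  shows "integrable M (\<lambda>\<omega>. e (Z i \<omega>) * h (X \<omega>))"
proof -
  have K0: "K \<ge> 0" using hb[of 0] by linarith
  show ?thesis
  proof (rule Bochner_Integration.integrable_bound[OF integrable_mult_right[OF integrable_abs[OF eps_int[of i]], of K]])
    show "(\<lambda>\<omega>. e (Z i \<omega>) * h (X \<omega>)) \<in> borel_measurable M" by measurable
    show "AE \<omega> in M. norm (e (Z i \<omega>) * h (X \<omega>)) \<le> norm (K * \<bar>e (Z i \<omega>)\<bar>)"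
    proof (rule AE_I2)
      fix \<omega>
      have "\<bar>e (Z i \<omega>)\<bar> * \<bar>h (X \<omega>)\<bar> \<le> \<bar>e (Z i \<omega>)\<bar> * K"
        by (rule mult_left_mono[OF hb]) simp
      then show "norm (e (Z i \<omega>) * h (X \<omega>)) \<le> norm (K * \<bar>e (Z i \<omega>)\<bar>)"
        using K0 by (simp add: abs_mult mult.commute)
    qed
  qed
qed

lemma I2:
  fixes h :: "real^'p^'n \<Rightarrow> real"
  assumes hm[measurable]: "h \<in> borel_measurable borel" and hb: "\<And>x. \<bar>h x\<bar> \<le> K"
  shows "integrable M (\<lambda>\<omega>. e (Z i \<omega>) * e (Z j \<omega>) * h (X \<omega>))"
proof -
  have K0: "K \<ge> 0" using hb[of 0] by linarith
  show ?thesis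
  proof (rule Bochner_Integration.integrable_bound[OF integrable_mult_right[OF Bochner_Integration.integrable_add[OF eps_sq_int[of i] eps_sq_int[of j]], of K]])
    show "(\<lambda>\<omega>. e (Z i \<omega>) * e (Z j \<omega>) * h (X \<omega>)) \<in> borel_measurable M" by measurable
    show "AE \<omega> in M. norm (e (Z i \<omega>) * e (Z j \<omega>) * h (X \<omega>)) \<le> norm (K * ((e (Z i \<omega>))\<^sup>2 + (e (Z j \<omega>))\<^sup>2))"
    proof (rule AE_I2)
      fix \<omega>
      define a where "a = e (Z i \<omega>)"
      define c where "c = e (Z j \<omega>)"
      have ac: "\<bar>a\<bar> * \<bar>c\<bar> \<le> a\<^sup>2 + c\<^sup>2"
      proof -
        have "(\<bar>a\<bar> - \<bar>c\<bar>)\<^sup>2 = a\<^sup>2 + c\<^sup>2 - 2 * (\<bar>a\<bar> * \<bar>c\<bar>)" by (simp add: power2_diff)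
        moreover have "(\<bar>a\<bar> - \<bar>c\<bar>)\<^sup>2 \<ge> 0" by simp
        moreover have "\<bar>a\<bar> * \<bar>c\<bar> \<ge> 0" by simp
        ultimately show ?thesis by linarith
      qed
      have "\<bar>a\<bar> * \<bar>c\<bar> * \<bar>h (X \<omega>)\<bar> \<le> (a\<^sup>2 + c\<^sup>2) * K"
        by (rule mult_mono[OF ac hb]) simp_all
      then show "norm (e (Z i \<omega>) * e (Z j \<omega>) * h (X \<omega>)) \<le> norm (K * ((e (Z i \<omega>))\<^sup>2 + (e (Z j \<omega>))\<^sup>2))"
        using K0 unfolding a_def[symmetric] c_def[symmetric] by (simp add: abs_mult mult.commute)
    qed
  qed
qed

lemma I0:
  fixes h :: "real^'p^'n \<Rightarrow> real"
  assumes hm[measurable]: "h \<in> borel_measurable borel" and hb: "\<And>x. \<bar>h x\<bar> \<le> K"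
  shows "integrable M (\<lambda>\<omega>. h (X \<omega>))"
  by (rule bounded_int_M[OF _ hb]) measurable

definition Sg where "Sg = Sigma_mat D"
definition av :: "real^'p^'n \<Rightarrow> real" where "av x = (Pm x *v \<theta>s) \<bullet> (Sg *v (Pm x *v \<theta>s))"
definition dv :: "real^'p^'n \<Rightarrow> real^'n" where "dv x = transpose (pinvm x) *v (Sg *v (Pm x *v \<theta>s))"
definition Cm :: "real^'p^'n \<Rightarrow> real^'n^'n" where "Cm x = transpose (pinvm x) ** Sg ** pinvm x"
definition nrm :: "real^'p^'n \<Rightarrow> real" where
  "nrm x = \<bar>av x\<bar> + (\<Sum>i\<in>UNIV. \<bar>dv x $ i\<bar>) + (\<Sum>i\<in>UNIV. \<Sum>j\<in>UNIV. \<bar>Cm x $ i $ j\<bar>)"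
definition Ik :: "nat \<Rightarrow> real^'p^'n \<Rightarrow> real" where "Ik k x = (if nrm x \<le> real k then 1 else 0)"

lemma av_meas[measurable]: "av \<in> borel_measurable borel" unfolding av_def by measurable
lemma dv_meas[measurable]: "dv \<in> borel_measurable borel" unfolding dv_def by measurable
lemma Cm_meas[measurable]: "Cm \<in> borel_measurable borel" unfolding Cm_def by measurable
lemma nrm_meas[measurable]: "nrm \<in> borel_measurable borel" unfolding nrm_def by measurable
lemma Ik_meas[measurable]: "Ik k \<in> borel_measurable borel" unfolding Ik_def by measurable

lemma av_le: "\<bar>av x\<bar> \<le> nrm x"
  unfolding nrm_def by (simp add: sum_nonneg)

lemma dv_le: "\<bar>dv x $ i\<bar> \<le> nrm x"
proof -
  have "\<bar>dv x $ i\<bar> \<le> (\<Sum>i\<in>UNIV. \<bar>dv x $ i\<bar>)" by (rule member_le_sum) auto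
  moreover have "0 \<le> (\<Sum>i\<in>UNIV. \<Sum>j\<in>UNIV. \<bar>Cm x $ i $ j\<bar>)" by (simp add: sum_nonneg)
  moreover have "0 \<le> \<bar>av x\<bar>" by simp
  ultimately show ?thesis unfolding nrm_def by linarith
qed

lemma Cm_le: "\<bar>Cm x $ i $ j\<bar> \<le> nrm x"
proof -
  have "\<bar>Cm x $ i $ j\<bar> \<le> (\<Sum>j\<in>UNIV. \<bar>Cm x $ i $ j\<bar>)" by (rule member_le_sum) auto
  also have "\<dots> \<le> (\<Sum>i\<in>UNIV. \<Sum>j\<in>UNIV. \<bar>Cm x $ i $ j\<bar>)" by (rule member_le_sum) (auto simp: sum_nonneg)
  moreover have "0 \<le> (\<Sum>i\<in>UNIV. \<bar>dv x $ i\<bar>)" by (simp add: sum_nonneg)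
  moreover have "0 \<le> \<bar>av x\<bar>" by simp
  ultimately show ?thesis unfolding nrm_def by linarith
qed

lemma trunc_bound: "\<bar>f\<bar> \<le> nrm x \<Longrightarrow> \<bar>f * Ik k x\<bar> \<le> real k"
  unfolding Ik_def by auto

definition Qm :: "'w \<Rightarrow> real" where
  "Qm \<omega> = (pinvm (X \<omega>) *v Y \<omega> - \<theta>s) \<bullet> (Sg *v (pinvm (X \<omega>) *v Y \<omega> - \<theta>s))"

lemma Qm_meas[measurable]: "Qm \<in> borel_measurable M"
  unfolding Qm_def by measurable

lemma Sg_sym: "transpose Sg = Sg" unfolding Sg_def by (rule Sig_sym)

lemma Q_decomp:
  assumes rk: "rank (X \<omega>) = CARD('n)"
  shows "Qm \<omega> = av (X \<omega>) - 2 * (\<Sum>i\<in>UNIV. e (Z i \<omega>) * dv (X \<omega>) $ i)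
     + (\<Sum>i\<in>UNIV. \<Sum>j\<in>UNIV. e (Z i \<omega>) * e (Z j \<omega>) * Cm (X \<omega>) $ i $ j)"
proof -
  interpret FR: fullrank "X \<omega>" by unfold_locales (rule rk)
  define eps where "eps = Y \<omega> - X \<omega> *v \<theta>s"
  have epsi: "\<And>i. eps $ i = e (Z i \<omega>)"
    unfolding eps_def e_def Z_def by (simp add: matrix_vector_mult_def inner_vec_def mult.commute)
  have "Qm \<omega> = (null_proj (X \<omega>) *v \<theta>s) \<bullet> (Sg *v (null_proj (X \<omega>) *v \<theta>s))
      - 2 * (eps \<bullet> (transpose (pinv (X \<omega>)) *v (Sg *v (null_proj (X \<omega>) *v \<theta>s))))
      + eps \<bullet> ((transpose (pinv (X \<omega>)) ** Sg ** pinv (X \<omega>)) *v eps)"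
    unfolding Qm_def FR.pinvm_eq eps_def by (rule FR.quad_decomp[OF Sg_sym])
  also have "\<dots> = av (X \<omega>) - 2 * (eps \<bullet> dv (X \<omega>)) + eps \<bullet> (Cm (X \<omega>) *v eps)"
    unfolding av_def dv_def Cm_def FR.pinvm_eq FR.Pm_eq ..
  also have "eps \<bullet> dv (X \<omega>) = (\<Sum>i\<in>UNIV. e (Z i \<omega>) * dv (X \<omega>) $ i)"
    by (simp add: inner_vec_def epsi)
  also have "eps \<bullet> (Cm (X \<omega>) *v eps) = (\<Sum>i\<in>UNIV. \<Sum>j\<in>UNIV. e (Z i \<omega>) * e (Z j \<omega>) * Cm (X \<omega>) $ i $ j)"
    by (simp add: inner_vec_def matrix_vector_mult_def epsi sum_distrib_left algebra_simps)
  finally show ?thesis .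
qed

lemma trunc:
  assumes frk: "\<And>\<omega>. \<omega> \<in> space M \<Longrightarrow> rank (X \<omega>) = CARD('n)"
  shows "integrable M (\<lambda>\<omega>. Qm \<omega> * Ik k (X \<omega>))"
    "(\<integral>\<omega>. Qm \<omega> * Ik k (X \<omega>) \<partial>M) = (\<integral>\<omega>. (av (X \<omega>) + \<sigma>\<^sup>2 * trace (Cm (X \<omega>))) * Ik k (X \<omega>) \<partial>M)"
proof -
  define h0 where "h0 = (\<lambda>x. av x * Ik k x)"
  define h1 where "h1 = (\<lambda>i x. dv x $ i * Ik k x)"
  define h2 where "h2 = (\<lambda>i j x. Cm x $ i $ j * Ik k x)"
  have [measurable]: "h0 \<in> borel_measurable borel" unfolding h0_def by measurable
  have [measurable]: "h1 i \<in> borel_measurable borel" for i unfolding h1_def by measurable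
  have [measurable]: "h2 i j \<in> borel_measurable borel" for i j unfolding h2_def by measurable
  have b0: "\<And>x. \<bar>h0 x\<bar> \<le> real k" unfolding h0_def by (rule trunc_bound[OF av_le])
  have b1: "\<And>x. \<bar>h1 i x\<bar> \<le> real k" for i unfolding h1_def by (rule trunc_bound[OF dv_le])
  have b2: "\<And>x. \<bar>h2 i j x\<bar> \<le> real k" for i j unfolding h2_def by (rule trunc_bound[OF Cm_le])
  define T where "T = (\<lambda>\<omega>. h0 (X \<omega>) - 2 * (\<Sum>i\<in>UNIV. e (Z i \<omega>) * h1 i (X \<omega>))
     + (\<Sum>i\<in>UNIV. \<Sum>j\<in>UNIV. e (Z i \<omega>) * e (Z j \<omega>) * h2 i j (X \<omega>)))"
  have pt: "\<And>\<omega>. \<omega> \<in> space M \<Longrightarrow> Qm \<omega> * Ik k (X \<omega>) = T \<omega>"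
    unfolding T_def h0_def h1_def h2_def
    by (subst Q_decomp[OF frk]) (simp_all add: algebra_simps sum_distrib_left)
  have i0: "integrable M (\<lambda>\<omega>. h0 (X \<omega>))" by (rule I0[OF _ b0]) simp
  have i1: "integrable M (\<lambda>\<omega>. e (Z i \<omega>) * h1 i (X \<omega>))" for i by (rule I1[OF _ b1]) simp
  have i2: "integrable M (\<lambda>\<omega>. e (Z i \<omega>) * e (Z j \<omega>) * h2 i j (X \<omega>))" for i j by (rule I2[OF _ b2]) simp
  have iT: "integrable M T" unfolding T_def using i0 i1 i2 by simp
  show "integrable M (\<lambda>\<omega>. Qm \<omega> * Ik k (X \<omega>))"
    using iT by (rule Bochner_Integration.integrable_cong[THEN iffD2, OF refl pt, rotated]) simp_all
  have "(\<integral>\<omega>. Qm \<omega> * Ik k (X \<omega>) \<partial>M) = (\<integral>\<omega>. T \<omega> \<partial>M)"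
    by (rule Bochner_Integration.integral_cong[OF refl pt])
  also have "\<dots> = (\<integral>\<omega>. h0 (X \<omega>) \<partial>M) - 2 * (\<Sum>i\<in>UNIV. (\<integral>\<omega>. e (Z i \<omega>) * h1 i (X \<omega>) \<partial>M))
     + (\<Sum>i\<in>UNIV. \<Sum>j\<in>UNIV. (\<integral>\<omega>. e (Z i \<omega>) * e (Z j \<omega>) * h2 i j (X \<omega>) \<partial>M))"
    unfolding T_def using i0 i1 i2 by (simp add: Bochner_Integration.integral_sum)
  also have "(\<Sum>i\<in>UNIV. (\<integral>\<omega>. e (Z i \<omega>) * h1 i (X \<omega>) \<partial>M)) = 0"
  proof -
    have "\<And>i. (\<integral>\<omega>. e (Z i \<omega>) * h1 i (X \<omega>) \<partial>M) = 0" by (rule L1[OF _ b1]) simp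
    then show ?thesis by simp
  qed
  also have "(\<Sum>i\<in>UNIV. \<Sum>j\<in>UNIV. (\<integral>\<omega>. e (Z i \<omega>) * e (Z j \<omega>) * h2 i j (X \<omega>) \<partial>M))
      = (\<Sum>i\<in>UNIV. \<sigma>\<^sup>2 * (\<integral>\<omega>. h2 i i (X \<omega>) \<partial>M))"
  proof (rule sum.cong[OF refl])
    fix i
    have "(\<Sum>j\<in>UNIV. (\<integral>\<omega>. e (Z i \<omega>) * e (Z j \<omega>) * h2 i j (X \<omega>) \<partial>M))
        = (\<Sum>j\<in>UNIV. (if j = i then \<sigma>\<^sup>2 * (\<integral>\<omega>. h2 i i (X \<omega>) \<partial>M) else 0))"
    proof (rule sum.cong[OF refl])
      fix j
      show "(\<integral>\<omega>. e (Z i \<omega>) * e (Z j \<omega>) * h2 i j (X \<omega>) \<partial>M) = (if j = i then \<sigma>\<^sup>2 * (\<integral>\<omega>. h2 i i (X \<omega>) \<partial>M) else 0)"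
      proof (cases "j = i")
        case True
        then show ?thesis using L3[where h="h2 i i" and K="real k" and i=i, OF _ b2] by (simp add: power2_eq_square)
      next
        case False
        then show ?thesis using L2[where h="h2 i j" and K="real k" and i=i and j=j, OF _ b2 False] by simp
      qed
    qed
    also have "\<dots> = \<sigma>\<^sup>2 * (\<integral>\<omega>. h2 i i (X \<omega>) \<partial>M)" by simp
    finally show "(\<Sum>j\<in>UNIV. (\<integral>\<omega>. e (Z i \<omega>) * e (Z j \<omega>) * h2 i j (X \<omega>) \<partial>M)) = \<sigma>\<^sup>2 * (\<integral>\<omega>. h2 i i (X \<omega>) \<partial>M)" .
  qed
  also have "(\<integral>\<omega>. h0 (X \<omega>) \<partial>M) - 2 * 0 + (\<Sum>i\<in>UNIV. \<sigma>\<^sup>2 * (\<integral>\<omega>. h2 i i (X \<omega>) \<partial>M))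
      = (\<integral>\<omega>. h0 (X \<omega>) + \<sigma>\<^sup>2 * (\<Sum>i\<in>UNIV. h2 i i (X \<omega>)) \<partial>M)"
  proof -
    have ii: "\<And>i. integrable M (\<lambda>\<omega>. h2 i i (X \<omega>))" by (rule I0[OF _ b2]) simp
    then show ?thesis using i0 by (simp add: Bochner_Integration.integral_sum sum_distrib_left)
  qed
  also have "\<dots> = (\<integral>\<omega>. (av (X \<omega>) + \<sigma>\<^sup>2 * trace (Cm (X \<omega>))) * Ik k (X \<omega>) \<partial>M)"
    unfolding h0_def h2_def trace_def by (simp add: algebra_simps sum_distrib_left)
  finally show "(\<integral>\<omega>. Qm \<omega> * Ik k (X \<omega>) \<partial>M) = (\<integral>\<omega>. (av (X \<omega>) + \<sigma>\<^sup>2 * trace (Cm (X \<omega>))) * Ik k (X \<omega>) \<partial>M)" .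
qed

definition Rv :: "real^'p^'n \<Rightarrow> real" where "Rv x = av x + \<sigma>\<^sup>2 * trace (Cm x)"

lemma Rv_meas[measurable]: "Rv \<in> borel_measurable borel" unfolding Rv_def by measurable

lemma av_nonneg: "av x \<ge> 0" unfolding av_def Sg_def by (rule q_nonneg)

lemma trace_Cm_nonneg: "trace (Cm x) \<ge> 0"
  unfolding trace_def Cm_def diag_quad Sg_def by (intro sum_nonneg q_nonneg)

lemma Rv_nonneg: "Rv x \<ge> 0" unfolding Rv_def using av_nonneg trace_Cm_nonneg by simp

lemma Qm_nonneg: "Qm \<omega> \<ge> 0" unfolding Qm_def Sg_def by (rule q_nonneg)

lemma trace_le: "\<bar>trace (Cm x)\<bar> \<le> nrm x"
proof -
  have "\<bar>trace (Cm x)\<bar> \<le> (\<Sum>i\<in>UNIV. \<bar>Cm x $ i $ i\<bar>)" unfolding trace_def by (rule sum_abs)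
  also have "\<dots> \<le> (\<Sum>i\<in>UNIV. \<Sum>j\<in>UNIV. \<bar>Cm x $ i $ j\<bar>)"
    by (intro sum_mono member_le_sum) auto
  also have "\<dots> \<le> nrm x" unfolding nrm_def by (simp add: sum_nonneg)
  finally show ?thesis .
qed

lemma Ik_01: "Ik k x = 0 \<or> Ik k x = 1" unfolding Ik_def by auto

lemma Ik_mono: "k \<le> k' \<Longrightarrow> Ik k x \<le> Ik k' x"
  unfolding Ik_def by auto

lemma Rv_Ik_bound: "\<bar>Rv x * Ik k x\<bar> \<le> real k + \<sigma>\<^sup>2 * real k"
proof (cases "nrm x \<le> real k")
  case True
  then have "\<bar>Rv x\<bar> \<le> real k + \<sigma>\<^sup>2 * real k"
  proof -
    have a: "\<bar>Rv x\<bar> \<le> \<bar>av x\<bar> + \<sigma>\<^sup>2 * \<bar>trace (Cm x)\<bar>"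
      unfolding Rv_def using abs_triangle_ineq[of "av x" "\<sigma>\<^sup>2 * trace (Cm x)"] by (simp add: abs_mult)
    have b: "\<sigma>\<^sup>2 * \<bar>trace (Cm x)\<bar> \<le> \<sigma>\<^sup>2 * real k"
      using trace_le[of x] True by (intro mult_left_mono) simp_all
    show ?thesis using a b av_le[of x] True by linarith
  qed
  then show ?thesis using True by (simp add: Ik_def)
next
  case False
  then show ?thesis by (simp add: Ik_def)
qed

lemma nn_lower:
  assumes frk: "\<And>\<omega>. \<omega> \<in> space M \<Longrightarrow> rank (X \<omega>) = CARD('n)"
  shows "(\<integral>\<^sup>+\<omega>. ennreal (Rv (X \<omega>)) \<partial>M) \<le> (\<integral>\<^sup>+\<omega>. ennreal (Qm \<omega>) \<partial>M)"
proof -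
  have step: "(\<integral>\<^sup>+\<omega>. ennreal (Rv (X \<omega>) * Ik k (X \<omega>)) \<partial>M) \<le> (\<integral>\<^sup>+\<omega>. ennreal (Qm \<omega>) \<partial>M)" for k
  proof -
    have iR: "integrable M (\<lambda>\<omega>. Rv (X \<omega>) * Ik k (X \<omega>))"
      by (rule bounded_int_M[OF _ Rv_Ik_bound]) measurable
    have iQ: "integrable M (\<lambda>\<omega>. Qm \<omega> * Ik k (X \<omega>))" by (rule trunc(1)) (rule frk)
    have eqQ: "(\<integral>\<^sup>+\<omega>. ennreal (Qm \<omega> * Ik k (X \<omega>)) \<partial>M) = ennreal (\<integral>\<omega>. Qm \<omega> * Ik k (X \<omega>) \<partial>M)"
      by (rule nn_integral_eq_integral[OF iQ]) (intro AE_I2, simp add: Qm_nonneg Ik_def)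
    have "(\<integral>\<^sup>+\<omega>. ennreal (Rv (X \<omega>) * Ik k (X \<omega>)) \<partial>M) = ennreal (\<integral>\<omega>. Rv (X \<omega>) * Ik k (X \<omega>) \<partial>M)"
      by (rule nn_integral_eq_integral[OF iR]) (intro AE_I2, simp add: Rv_nonneg Ik_def)
    also have "(\<integral>\<omega>. Rv (X \<omega>) * Ik k (X \<omega>) \<partial>M) = (\<integral>\<omega>. Qm \<omega> * Ik k (X \<omega>) \<partial>M)"
    proof -
      have "(\<integral>\<omega>. Qm \<omega> * Ik k (X \<omega>) \<partial>M) = (\<integral>\<omega>. (av (X \<omega>) + \<sigma>\<^sup>2 * trace (Cm (X \<omega>))) * Ik k (X \<omega>) \<partial>M)"
        by (rule trunc(2)) (rule frk)
      then show ?thesis unfolding Rv_def by simp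
    qed
    also have "ennreal (\<integral>\<omega>. Qm \<omega> * Ik k (X \<omega>) \<partial>M) = (\<integral>\<^sup>+\<omega>. ennreal (Qm \<omega> * Ik k (X \<omega>)) \<partial>M)"
      by (rule eqQ[symmetric])
    also have "\<dots> \<le> (\<integral>\<^sup>+\<omega>. ennreal (Qm \<omega>) \<partial>M)"
      by (intro nn_integral_mono ennreal_leI) (simp add: Ik_def Qm_nonneg)
    finally show ?thesis .
  qed
  have sup: "(SUP k. ennreal (Rv x * Ik k x)) = ennreal (Rv x)" for x
  proof (rule antisym)
    show "(SUP k. ennreal (Rv x * Ik k x)) \<le> ennreal (Rv x)"
      by (intro SUP_least ennreal_leI) (simp add: Ik_def Rv_nonneg)
    have "nrm x \<le> real (nat \<lceil>nrm x\<rceil>)" by (rule real_nat_ceiling_ge)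
    then have "Ik (nat \<lceil>nrm x\<rceil>) x = 1" unfolding Ik_def by simp
    then show "ennreal (Rv x) \<le> (SUP k. ennreal (Rv x * Ik k x))"
      by (intro SUP_upper2[of "nat \<lceil>nrm x\<rceil>"]) simp_all
  qed
  have inc: "incseq (\<lambda>k \<omega>. ennreal (Rv (X \<omega>) * Ik k (X \<omega>)))"
    by (intro monoI le_funI ennreal_leI mult_left_mono Ik_mono Rv_nonneg)
  have "(\<integral>\<^sup>+\<omega>. ennreal (Rv (X \<omega>)) \<partial>M) = (\<integral>\<^sup>+\<omega>. (SUP k. ennreal (Rv (X \<omega>) * Ik k (X \<omega>))) \<partial>M)"
    by (simp add: sup)
  also have "\<dots> = (SUP k. (\<integral>\<^sup>+\<omega>. ennreal (Rv (X \<omega>) * Ik k (X \<omega>)) \<partial>M))"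
    by (rule nn_integral_monotone_convergence_SUP[OF inc]) measurable
  also have "\<dots> \<le> (\<integral>\<^sup>+\<omega>. ennreal (Qm \<omega>) \<partial>M)"
    by (rule SUP_least) (rule step)
  finally show ?thesis .
qed

end

lemma (in prob_space) distr_pair_indep:
  assumes f[measurable]: "f \<in> measurable M S" and g[measurable]: "g \<in> measurable M T"
    and hind: "\<And>A B. A \<in> sets S \<Longrightarrow> B \<in> sets T \<Longrightarrow>
       prob ((f -` A \<inter> space M) \<inter> (g -` B \<inter> space M)) = prob (f -` A \<inter> space M) * prob (g -` B \<inter> space M)"
  shows "distr M S f \<Otimes>\<^sub>M distr M T g = distr M (S \<Otimes>\<^sub>M T) (\<lambda>x. (f x, g x))"
proof -
  have XY: "(\<lambda>x. (f x, g x)) \<in> measurable M (S \<Otimes>\<^sub>M T)" by measurable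
  interpret X: prob_space "distr M S f" by (rule prob_space_distr) fact
  interpret Y: prob_space "distr M T g" by (rule prob_space_distr) fact
  interpret XY: pair_prob_space "distr M S f" "distr M T g" ..
  show ?thesis
  proof (rule pair_measure_eqI)
    show "sigma_finite_measure (distr M S f)" ..
    show "sigma_finite_measure (distr M T g)" ..
    fix A B assume A: "A \<in> sets (distr M S f)" and B: "B \<in> sets (distr M T g)"
    have "emeasure (distr M (S \<Otimes>\<^sub>M T) (\<lambda>x. (f x, g x))) (A \<times> B) = emeasure M ((\<lambda>x. (f x, g x)) -` (A \<times> B) \<inter> space M)"
      using A B by (intro emeasure_distr[OF XY]) auto
    also have "(\<lambda>x. (f x, g x)) -` (A \<times> B) \<inter> space M = (f -` A \<inter> space M) \<inter> (g -` B \<inter> space M)" by auto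
    also have "emeasure M \<dots> = emeasure M (f -` A \<inter> space M) * emeasure M (g -` B \<inter> space M)"
      using hind[of A B] A B
      by (simp add: emeasure_eq_measure measure_nonneg ennreal_mult)
    also have "\<dots> = emeasure (distr M S f) A * emeasure (distr M T g) B"
      using A B by (simp add: emeasure_distr)
    finally show "emeasure (distr M S f) A * emeasure (distr M T g) B = emeasure (distr M (S \<Otimes>\<^sub>M T) (\<lambda>x. (f x, g x))) (A \<times> B)" by simp
  qed simp
qed

definition Th :: "real^'p^'n \<Rightarrow> real^'n \<Rightarrow> real^'p \<Rightarrow> real^'p" where
  "Th x y t = pinvm x *v y + cc (norm (pinvm x *v y)) (norm (Pm x *v init_dir t)) *\<^sub>R (Pm x *v init_dir t)"

lemma cc_meas[measurable]: "(\<lambda>p. cc (fst p) (snd p)) \<in> borel_measurable borel"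
  unfolding cc_def by (intro borel_measurable_continuous_onI) (intro continuous_intros)

lemma init_dir_meas[measurable]: "init_dir \<in> borel_measurable borel"
  unfolding init_dir_def by measurable

lemma Th_meas[measurable (raw)]:
  assumes [measurable]: "x \<in> borel_measurable N" "y \<in> borel_measurable N" "t \<in> borel_measurable N"
  shows "(\<lambda>w. Th (x w) (y w) (t w)) \<in> borel_measurable N"
proof -
  have [measurable]: "(\<lambda>w. cc (norm (pinvm (x w) *v y w)) (norm (Pm (x w) *v init_dir (t w)))) \<in> borel_measurable N"
    using measurable_compose[OF _ cc_meas, of "\<lambda>w. (norm (pinvm (x w) *v y w), norm (Pm (x w) *v init_dir (t w)))" N]
    by (simp add: borel_prod[symmetric])
  show ?thesis unfolding Th_def by measurable
qed

lemma init_dir_neg: "init_dir (- t) = - init_dir t"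
  unfolding init_dir_def by simp

lemma Th_neg: "Th x y (- t) = pinvm x *v y - cc (norm (pinvm x *v y)) (norm (Pm x *v init_dir t)) *\<^sub>R (Pm x *v init_dir t)"
proof -
  have "Pm x *v init_dir (- t) = - (Pm x *v init_dir t)"
    unfolding init_dir_neg using matrix_vector_mult_scaleR[of "Pm x" "-1" "init_dir t"] by simp
  then show ?thesis unfolding Th_def by simp
qed

lemma parallelogram_q:
  fixes S :: "real^'p^'p"
  assumes Ssym: "transpose S = S" and psd: "\<And>v. v \<bullet> (S *v v) \<ge> 0"
  shows "(u + v) \<bullet> (S *v (u + v)) + (u - v) \<bullet> (S *v (u - v)) \<ge> 2 * (u \<bullet> (S *v u))"
proof -
  have "(u + v) \<bullet> (S *v (u + v)) + (u - v) \<bullet> (S *v (u - v)) = 2 * (u \<bullet> (S *v u)) + 2 * (v \<bullet> (S *v v))"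
    by (simp add: matrix_vector_right_distrib matrix_vector_mult_diff_distrib inner_add_left inner_add_right
        inner_diff_left inner_diff_right)
  then show ?thesis using psd[of v] by simp
qed

theorem proposition1:
  fixes M :: "'w measure"
    and D :: "((real^'p) \<times> real) measure"
    and X :: "'w \<Rightarrow> real^'p^'n"
    and Y :: "'w \<Rightarrow> real^'n"
    and a0 :: "'w \<Rightarrow> real^'m"
    and W0 :: "'w \<Rightarrow> real^'p^'m"
    and \<theta>s :: "real^'p"
    and \<sigma> :: real
    and \<theta>hat :: "'w \<Rightarrow> real^'p"
  assumes pn: "CARD('p) > CARD('n)"
    and M: "prob_space M"
    and D: "prob_space D" "sets D = sets borel"
    and mom_x: "integrable D (\<lambda>z. (norm (fst z))\<^sup>2)"
    and mom_y: "integrable D (\<lambda>z. (snd z)\<^sup>2)"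
    and theta_star: "\<And>\<theta>. (\<integral>z. (snd z - fst z \<bullet> \<theta>s)\<^sup>2 \<partial>D) \<le> (\<integral>z. (snd z - fst z \<bullet> \<theta>)\<^sup>2 \<partial>D)"
    and noise_mean: "AE z in D. real_cond_exp D (vimage_algebra (space D) fst borel)
                        (\<lambda>z. snd z - fst z \<bullet> \<theta>s) z = 0"
    and noise_var: "AE z in D. real_cond_exp D (vimage_algebra (space D) fst borel)
                        (\<lambda>z. (snd z - fst z \<bullet> \<theta>s)\<^sup>2) z = \<sigma>\<^sup>2"
    and meas: "X \<in> borel_measurable M" "Y \<in> borel_measurable M"
              "a0 \<in> borel_measurable M" "W0 \<in> borel_measurable M"
    and iid: "prob_space.indep_vars M (\<lambda>_. borel) (\<lambda>i \<omega>. (X \<omega> $ i, Y \<omega> $ i)) UNIV"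
    and ident: "\<And>i. distr M borel (\<lambda>\<omega>. (X \<omega> $ i, Y \<omega> $ i)) = D"
    and indep_init: "prob_space.indep_set M
        {(\<lambda>\<omega>. (a0 \<omega>, W0 \<omega>)) -` S \<inter> space M | S. S \<in> sets borel}
        {(\<lambda>\<omega>. (X \<omega>, Y \<omega>)) -` S \<inter> space M | S. S \<in> sets borel}"
    and symm: "distr M borel (\<lambda>\<omega>. transpose (W0 \<omega>) *v a0 \<omega>)
             = distr M borel (\<lambda>\<omega>. - (transpose (W0 \<omega>) *v a0 \<omega>))"
    and full_rank: "\<And>\<omega>. \<omega> \<in> space M \<Longrightarrow> rank (X \<omega>) = CARD('n)"
    and est: "\<And>\<omega>. \<omega> \<in> space M \<Longrightarrow>
               is_bias_min (X \<omega>) (Y \<omega>) (init_dir (transpose (W0 \<omega>) *v a0 \<omega>)) (\<theta>hat \<omega>)"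
  shows "(\<integral>\<^sup>+\<omega>. ennreal (Risk D \<theta>s (\<theta>hat \<omega>)) \<partial>M)
         \<ge> (\<integral>\<^sup>+\<omega>. ennreal (\<theta>s \<bullet> (B_mat (Sigma_mat D) (X \<omega>) *v \<theta>s)) \<partial>M)
           + ennreal (\<sigma>\<^sup>2) * (\<integral>\<^sup>+\<omega>. ennreal (trace (C_mat (Sigma_mat D) (X \<omega>))) \<partial>M)"
proof -
  interpret PM: prob_space M by (rule M)
  interpret MS: msetup D \<theta>s \<sigma> M X Y
    using D mom_x mom_y noise_mean noise_var M meas(1) meas(2) iid ident
    by (intro msetup.intro dsetup.intro msetup_axioms.intro) assumption+
  note [measurable] = meas
  define Sg where "Sg = Sigma_mat D"
  define q where "q = (\<lambda>u. u \<bullet> (Sg *v u))"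
  define \<theta>0 where "\<theta>0 = (\<lambda>\<omega>. transpose (W0 \<omega>) *v a0 \<omega>)"
  define V where "V = (\<lambda>\<omega>. (X \<omega>, Y \<omega>))"
  define H where "H = (\<lambda>p::(real^'p) \<times> ((real^'p^'n) \<times> (real^'n)). ennreal (q (Th (fst (snd p)) (snd (snd p)) (fst p) - \<theta>s)))"
  have Hm[measurable]: "H \<in> borel_measurable (borel \<Otimes>\<^sub>M B2)"
    unfolding H_def q_def by measurable
  have \<theta>0m[measurable]: "\<theta>0 \<in> borel_measurable M" unfolding \<theta>0_def by measurable
  have Vm[measurable]: "V \<in> measurable M B2" unfolding V_def by measurable
  have qnn: "\<And>u. q u \<ge> 0" unfolding q_def Sg_def by (rule MS.q_nonneg)
  have LHS: "(\<integral>\<^sup>+\<omega>. ennreal (Risk D \<theta>s (\<theta>hat \<omega>)) \<partial>M) = (\<integral>\<^sup>+\<omega>. H (\<theta>0 \<omega>, V \<omega>) \<partial>M)"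
  proof (rule nn_integral_cong)
    fix \<omega> assume \<omega>: "\<omega> \<in> space M"
    interpret FR: fullrank "X \<omega>" by unfold_locales (rule full_rank[OF \<omega>])
    have "\<theta>hat \<omega> = Th (X \<omega>) (Y \<omega>) (\<theta>0 \<omega>)"
      unfolding Th_def FR.pinvm_eq FR.Pm_eq \<theta>0_def by (rule FR.bias_min_formula[OF est[OF \<omega>]])
    then show "ennreal (Risk D \<theta>s (\<theta>hat \<omega>)) = H (\<theta>0 \<omega>, V \<omega>)"
      unfolding H_def V_def q_def Sg_def by (simp add: MS.risk_formula)
  qed
  define tm where "tm = (\<lambda>p::(real^'m) \<times> (real^'p^'m). transpose (snd p) *v fst p)"
  have tmm: "tm \<in> borel_measurable (borel :: ((real^'m) \<times> (real^'p^'m)) measure)"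
  proof -
    have "tm \<in> borel_measurable (borel \<Otimes>\<^sub>M borel :: ((real^'m) \<times> (real^'p^'m)) measure)"
      unfolding tm_def by measurable
    then show ?thesis by (simp add: borel_prod)
  qed
  have ntmm: "(\<lambda>p. - tm p) \<in> borel_measurable (borel :: ((real^'m) \<times> (real^'p^'m)) measure)"
    using tmm by measurable
  have ind2: "\<And>a b. a \<in> {(\<lambda>\<omega>. (a0 \<omega>, W0 \<omega>)) -` S \<inter> space M | S. S \<in> sets borel} \<Longrightarrow>
      b \<in> {(\<lambda>\<omega>. (X \<omega>, Y \<omega>)) -` S \<inter> space M | S. S \<in> sets borel} \<Longrightarrow> PM.prob (a \<inter> b) = PM.prob a * PM.prob b"
    using indep_init unfolding PM.indep_sets2_eq by blast
  have distr_eq: "distr M (borel \<Otimes>\<^sub>M B2) (\<lambda>\<omega>. (f \<omega>, V \<omega>)) = distr M borel f \<Otimes>\<^sub>M distr M B2 V"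
    if fdef: "f = (\<lambda>\<omega>. ff (a0 \<omega>, W0 \<omega>))" and ffm: "ff \<in> borel_measurable (borel :: ((real^'m) \<times> (real^'p^'m)) measure)"
    for f :: "'w \<Rightarrow> real^'p" and ff
  proof -
    have awm: "(\<lambda>\<omega>. (a0 \<omega>, W0 \<omega>)) \<in> measurable M (borel :: ((real^'m) \<times> (real^'p^'m)) measure)"
    proof -
      have "(\<lambda>\<omega>. (a0 \<omega>, W0 \<omega>)) \<in> measurable M (borel \<Otimes>\<^sub>M borel :: ((real^'m) \<times> (real^'p^'m)) measure)"
        by measurable
      then show ?thesis by (simp add: borel_prod)
    qed
    have fm: "f \<in> borel_measurable M" unfolding fdef using measurable_compose[OF awm ffm] by (simp add: comp_def)
    show ?thesis
    proof (rule PM.distr_pair_indep[OF fm Vm, symmetric])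
      fix A :: "(real^'p) set" and B :: "((real^'p^'n) \<times> (real^'n)) set"
      assume A: "A \<in> sets (borel :: (real^'p) measure)" and B: "B \<in> sets B2"
      have "f -` A \<inter> space M = (\<lambda>\<omega>. (a0 \<omega>, W0 \<omega>)) -` (ff -` A \<inter> space borel) \<inter> space M"
        unfolding fdef by auto
      moreover have "ff -` A \<inter> space borel \<in> sets borel" using ffm A by (rule measurable_sets)
      ultimately have a: "f -` A \<inter> space M \<in> {(\<lambda>\<omega>. (a0 \<omega>, W0 \<omega>)) -` S \<inter> space M | S. S \<in> sets borel}" by blast
      have "V -` B \<inter> space M \<in> {(\<lambda>\<omega>. (X \<omega>, Y \<omega>)) -` S \<inter> space M | S. S \<in> sets borel}"
      proof -
        have B': "B \<in> sets (borel :: ((real^'p^'n) \<times> (real^'n)) measure)" using B unfolding borel_prod .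
        show ?thesis unfolding V_def using B' by blast
      qed
      then show "PM.prob ((f -` A \<inter> space M) \<inter> (V -` B \<inter> space M)) = PM.prob (f -` A \<inter> space M) * PM.prob (V -` B \<inter> space M)"
        using ind2[OF a] by blast
    qed
  qed
  have d1: "distr M (borel \<Otimes>\<^sub>M B2) (\<lambda>\<omega>. (\<theta>0 \<omega>, V \<omega>)) = distr M borel \<theta>0 \<Otimes>\<^sub>M distr M B2 V"
    by (rule distr_eq[OF _ tmm]) (simp add: \<theta>0_def tm_def)
  have d2: "distr M (borel \<Otimes>\<^sub>M B2) (\<lambda>\<omega>. (- \<theta>0 \<omega>, V \<omega>)) = distr M borel (\<lambda>\<omega>. - \<theta>0 \<omega>) \<Otimes>\<^sub>M distr M B2 V"
    by (rule distr_eq[OF _ ntmm]) (simp add: \<theta>0_def tm_def)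
  have symm': "distr M borel \<theta>0 = distr M borel (\<lambda>\<omega>. - \<theta>0 \<omega>)" using symm unfolding \<theta>0_def .
  have SYM: "(\<integral>\<^sup>+\<omega>. H (\<theta>0 \<omega>, V \<omega>) \<partial>M) = (\<integral>\<^sup>+\<omega>. H (- \<theta>0 \<omega>, V \<omega>) \<partial>M)"
  proof -
    have "(\<integral>\<^sup>+\<omega>. H (\<theta>0 \<omega>, V \<omega>) \<partial>M) = integral\<^sup>N (distr M (borel \<Otimes>\<^sub>M B2) (\<lambda>\<omega>. (\<theta>0 \<omega>, V \<omega>))) H"
      by (rule nn_integral_distr[symmetric]) simp_all
    also have "\<dots> = integral\<^sup>N (distr M (borel \<Otimes>\<^sub>M B2) (\<lambda>\<omega>. (- \<theta>0 \<omega>, V \<omega>))) H"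
      unfolding d1 d2 symm' ..
    also have "\<dots> = (\<integral>\<^sup>+\<omega>. H (- \<theta>0 \<omega>, V \<omega>) \<partial>M)"
      by (rule nn_integral_distr) simp_all
    finally show ?thesis .
  qed
  have pt: "H (\<theta>0 \<omega>, V \<omega>) + H (- \<theta>0 \<omega>, V \<omega>) \<ge> 2 * ennreal (MS.Qm \<omega>)" for \<omega>
  proof -
    define u where "u = pinvm (X \<omega>) *v Y \<omega> - \<theta>s"
    define v where "v = cc (norm (pinvm (X \<omega>) *v Y \<omega>)) (norm (Pm (X \<omega>) *v init_dir (\<theta>0 \<omega>))) *\<^sub>R (Pm (X \<omega>) *v init_dir (\<theta>0 \<omega>))"
    have e1: "Th (X \<omega>) (Y \<omega>) (\<theta>0 \<omega>) - \<theta>s = u + v" unfolding Th_def u_def v_def by simp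
    have e2: "Th (X \<omega>) (Y \<omega>) (- \<theta>0 \<omega>) - \<theta>s = u - v" unfolding Th_neg u_def v_def by simp
    have Q: "MS.Qm \<omega> = q u" unfolding MS.Qm_def u_def q_def Sg_def MS.Sg_def ..
    have "2 * q u \<le> q (u + v) + q (u - v)"
      unfolding q_def by (rule parallelogram_q) (use MS.Sg_sym qnn in \<open>simp_all add: MS.Sg_def Sg_def q_def\<close>)
    then have "ennreal (2 * q u) \<le> ennreal (q (u + v) + q (u - v))" by (rule ennreal_leI)
    also have "\<dots> = ennreal (q (u + v)) + ennreal (q (u - v))" using qnn by (simp add: ennreal_plus)
    moreover have "ennreal (2 * q u) = 2 * ennreal (q u)" using qnn[of u] by (simp add: ennreal_mult)
    ultimately have "2 * ennreal (q u) \<le> ennreal (q (u + v)) + ennreal (q (u - v))" by simp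
    then show ?thesis unfolding H_def V_def Q by (simp add: e1 e2)
  qed
  have STEP3: "(\<integral>\<^sup>+\<omega>. ennreal (MS.Qm \<omega>) \<partial>M) \<le> (\<integral>\<^sup>+\<omega>. H (\<theta>0 \<omega>, V \<omega>) \<partial>M)"
  proof -
    have "2 * (\<integral>\<^sup>+\<omega>. ennreal (MS.Qm \<omega>) \<partial>M) = (\<integral>\<^sup>+\<omega>. 2 * ennreal (MS.Qm \<omega>) \<partial>M)"
      by (rule nn_integral_cmult[symmetric]) measurable
    also have "\<dots> \<le> (\<integral>\<^sup>+\<omega>. H (\<theta>0 \<omega>, V \<omega>) + H (- \<theta>0 \<omega>, V \<omega>) \<partial>M)"
      by (rule nn_integral_mono) (rule pt)
    also have "\<dots> = (\<integral>\<^sup>+\<omega>. H (\<theta>0 \<omega>, V \<omega>) \<partial>M) + (\<integral>\<^sup>+\<omega>. H (- \<theta>0 \<omega>, V \<omega>) \<partial>M)"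
      by (rule nn_integral_add) measurable
    also have "\<dots> = 2 * (\<integral>\<^sup>+\<omega>. H (\<theta>0 \<omega>, V \<omega>) \<partial>M)" unfolding SYM[symmetric] by (simp add: mult_2)
    finally show ?thesis by (subst (asm) ennreal_mult_le_mult_iff) simp_all
  qed
  have STEP4: "(\<integral>\<^sup>+\<omega>. ennreal (MS.Rv (X \<omega>)) \<partial>M) \<le> (\<integral>\<^sup>+\<omega>. ennreal (MS.Qm \<omega>) \<partial>M)"
    by (rule MS.nn_lower) (rule full_rank)
  have STEP5: "(\<integral>\<^sup>+\<omega>. ennreal (MS.Rv (X \<omega>)) \<partial>M) =
     (\<integral>\<^sup>+\<omega>. ennreal (\<theta>s \<bullet> (B_mat (Sigma_mat D) (X \<omega>) *v \<theta>s)) \<partial>M)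
           + ennreal (\<sigma>\<^sup>2) * (\<integral>\<^sup>+\<omega>. ennreal (trace (C_mat (Sigma_mat D) (X \<omega>))) \<partial>M)"
  proof -
    have "(\<integral>\<^sup>+\<omega>. ennreal (MS.Rv (X \<omega>)) \<partial>M) = (\<integral>\<^sup>+\<omega>. ennreal (MS.av (X \<omega>)) + ennreal (\<sigma>\<^sup>2) * ennreal (trace (MS.Cm (X \<omega>))) \<partial>M)"
      unfolding MS.Rv_def using MS.av_nonneg MS.trace_Cm_nonneg
      by (simp add: ennreal_plus ennreal_mult)
    also have "\<dots> = (\<integral>\<^sup>+\<omega>. ennreal (MS.av (X \<omega>)) \<partial>M) + ennreal (\<sigma>\<^sup>2) * (\<integral>\<^sup>+\<omega>. ennreal (trace (MS.Cm (X \<omega>))) \<partial>M)"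
      by (subst nn_integral_add) (simp_all add: nn_integral_cmult)
    also have "(\<integral>\<^sup>+\<omega>. ennreal (MS.av (X \<omega>)) \<partial>M) = (\<integral>\<^sup>+\<omega>. ennreal (\<theta>s \<bullet> (B_mat (Sigma_mat D) (X \<omega>) *v \<theta>s)) \<partial>M)"
    proof (rule nn_integral_cong)
      fix \<omega> assume \<omega>: "\<omega> \<in> space M"
      interpret FR: fullrank "X \<omega>" by unfold_locales (rule full_rank[OF \<omega>])
      show "ennreal (MS.av (X \<omega>)) = ennreal (\<theta>s \<bullet> (B_mat (Sigma_mat D) (X \<omega>) *v \<theta>s))"
        unfolding MS.av_def FR.B_eq FR.Pm_eq MS.Sg_def ..
    qed
    also have "(\<integral>\<^sup>+\<omega>. ennreal (trace (MS.Cm (X \<omega>))) \<partial>M) = (\<integral>\<^sup>+\<omega>. ennreal (trace (C_mat (Sigma_mat D) (X \<omega>))) \<partial>M)"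
    proof (rule nn_integral_cong)
      fix \<omega> assume \<omega>: "\<omega> \<in> space M"
      interpret FR: fullrank "X \<omega>" by unfold_locales (rule full_rank[OF \<omega>])
      show "ennreal (trace (MS.Cm (X \<omega>))) = ennreal (trace (C_mat (Sigma_mat D) (X \<omega>)))"
        unfolding MS.Cm_def FR.C_eq FR.pinvm_eq MS.Sg_def ..
    qed
    finally show ?thesis .
  qed
  show ?thesis
    unfolding LHS STEP5[symmetric] using STEP4 STEP3 by (rule order.trans)
qed

end
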